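(* Let $\Pi=(t_k)_{k\in\mathbb{Z}}$ be a sampling sequence with constants $0<\delta\le\Delta$, let $\chi$ be a kernel satisfying $(\chi1)$–$(\chi4)$ whose function $L$ in $(\chi3)$ satisfies $(L1)$, $(L2)$ and has compact support. Let $\varphi$ be a convex $\varphi$-function satisfying condition (H) with a convex $\varphi$-function $\eta$, and let $f\in L^{\varphi+\eta}(\mathbb{R})$. Then for every $0<\alpha<1$ there exist constants $\mu>0$, $\lambda_0>0$ and $\lambda>0$ such that, with $\omega(f,\delta')_\eta:=\sup_{|t|\le\delta'} I^{\eta}[\lambda(f(\cdot+t)-f(\cdot))]$, for every sufficiently large $w>0$, $$I^{\varphi}[\mu(S_wf-f)]\le\frac{\|L\|_1}{3\delta\, m_{0,\Pi}(L)}\,\omega(f,1/w^{\alpha})_\eta+\frac{\Delta}{3\delta}\,\omega(f,\Delta/w)_\eta+\frac{I^{\varphi}[\lambda_0 f]}{3}\,w^{-\theta_0},$$ where $\theta_0>0$ is the constant of condition $(\chi4)$.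
   Context: A $\varphi$-function is a continuous non-decreasing $\varphi:[0,\infty)\to[0,\infty)$ with $\varphi(0)=0$, $\varphi(u)>0$ for $u>0$, and $\varphi(u)\to+\infty$ as $u\to+\infty$. For a $\varphi$-function $\varphi$ and measurable $f$, $I^{\varphi}[f]:=\int_{\mathbb{R}}\varphi(|f(x)|)\,dx$; $L^{\varphi}(\mathbb{R})=\{f: I^{\varphi}[\lambda f]<\infty\text{ for some }\lambda>0\}$; $L^{\varphi+\eta}(\mathbb{R})$ is the Orlicz space generated by $\varphi+\eta$. A sampling sequence $\Pi=(t_k)$: strictly increasing reals, $t_k\to\pm\infty$ as $k\to\pm\infty$, with $\delta\le\Delta_k:=t_{k+1}-t_k\le\Delta$ for constants $0<\delta\le\Delta$. A kernel is $\chi:\mathbb{R}^2\to\mathbb{R}$ with: $(\chi1)$ $k\mapsto\chi(wx-t_k,u)\in\ell^1(\mathbb{Z})$ for all $x,u$ and $w>0$; $(\chi2)$ $\chi(x,0)=0$; $(\chi3)$ there exist measurable $L:\mathbb{R}\to[0,\infty)$ and a $\varphi$-function $\psi$ with $|\chi(x,u)-\chi(x,v)|\le L(x)\psi(|u-v|)$; $(\chi4)$ there is $\theta_0>0$ with $\sup_{u\ne0}\left|\frac1u\sum_k\chi(wx-t_k,u)-1\right|=\mathcal{O}(w^{-\theta_0})$ as $w\to+\infty$ uniformly in $x$. $(L1)$: $L\in L^1(\mathbb{R})$, bounded near $0$; $(L2)$: some $\beta_0>0$ with $\sup_{u}\sum_kL(u-t_k)|u-t_k|^{\beta_0}<\infty$.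 $m_{0,\Pi}(L):=\sup_u\sum_kL(u-t_k)<\infty$. Condition (H): there is a $\varphi$-function $\eta$ such that for every $\lambda\in(0,1)$ there is $C_\lambda\in(0,1)$ with $\varphi(C_\lambda\psi(u))\le\eta(\lambda u)$ for all $u\ge0$. Operators: $(S_wf)(x):=\sum_k\chi\!\left(wx-t_k,\frac{w}{\Delta_k}\int_{t_k/w}^{t_{k+1}/w}f(u)\,du\right)$ for locally integrable $f$ with convergent series. *)

theory Defs
  imports "HOL-Analysis.Analysis"
begin

definition phi_function :: "(real \<Rightarrow> real) \<Rightarrow> bool" where
  "phi_function \<phi> \<longleftrightarrow> continuous_on {0..} \<phi> \<and> mono_on {0..} \<phi> \<and> \<phi> 0 = 0
     \<and> (\<forall>u>0. \<phi> u > 0) \<and> filterlim \<phi> at_top at_top"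

definition modular :: "(real \<Rightarrow> real) \<Rightarrow> (real \<Rightarrow> real) \<Rightarrow> ennreal" where
  "modular \<phi> f = (\<integral>\<^sup>+ x. ennreal (\<phi> \<bar>f x\<bar>) \<partial>lebesgue)"

definition orlicz_space :: "(real \<Rightarrow> real) \<Rightarrow> (real \<Rightarrow> real) set" where
  "orlicz_space \<phi> = {f. f \<in> borel_measurable lebesgue \<and>
      (\<exists>c>0. modular \<phi> (\<lambda>x. c * f x) < \<infinity>)}"

definition sampling_sequence :: "(int \<Rightarrow> real) \<Rightarrow> real \<Rightarrow> real \<Rightarrow> bool" where
  "sampling_sequence t \<delta> \<Delta> \<longleftrightarrow> strict_mono t \<and> filterlim t at_top at_top
     \<and> filterlim t at_bot at_bot \<and> 0 < \<delta> \<and> \<delta> \<le> \<Delta>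
     \<and> (\<forall>k. \<delta> \<le> t (k+1) - t k \<and> t (k+1) - t k \<le> \<Delta>)"

text \<open>Kernel conditions (chi1)-(chi4), with L, psi from (chi3) and theta0 from (chi4).\<close>
definition kernel_cond :: "(int \<Rightarrow> real) \<Rightarrow> (real \<Rightarrow> real \<Rightarrow> real) \<Rightarrow> (real \<Rightarrow> real)
     \<Rightarrow> (real \<Rightarrow> real) \<Rightarrow> real \<Rightarrow> bool" where
  "kernel_cond t K L \<psi> \<theta>\<^sub>0 \<longleftrightarrow>
     (\<forall>x u w. w > 0 \<longrightarrow> (\<lambda>k. \<bar>K (w * x - t k) u\<bar>) summable_on UNIV)
   \<and> (\<forall>x. K x 0 = 0)
   \<and> L \<in> borel_measurable lebesgue \<and> (\<forall>x. L x \<ge> 0) \<and> phi_function \<psi>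
   \<and> (\<forall>x u v. \<bar>K x u - K x v\<bar> \<le> L x * \<psi> \<bar>u - v\<bar>)
   \<and> \<theta>\<^sub>0 > 0
   \<and> (\<exists>C W. \<forall>w\<ge>W. \<forall>x u. u \<noteq> 0 \<longrightarrow>
          \<bar>(1 / u) * (\<Sum>\<^sub>\<infinity>k. K (w * x - t k) u) - 1\<bar> \<le> C * w powr (- \<theta>\<^sub>0))"

definition L1_cond :: "(real \<Rightarrow> real) \<Rightarrow> bool" where
  "L1_cond L \<longleftrightarrow> integrable lebesgue L \<and> (\<exists>r>0. \<exists>M. \<forall>x. \<bar>x\<bar> < r \<longrightarrow> L x \<le> M)"

definition L2_cond :: "(int \<Rightarrow> real) \<Rightarrow> (real \<Rightarrow> real) \<Rightarrow> bool" where
  "L2_cond t L \<longleftrightarrow> (\<exists>\<beta>\<^sub>0>0. \<exists>M. \<forall>u.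
      (\<lambda>k. L (u - t k) * \<bar>u - t k\<bar> powr \<beta>\<^sub>0) summable_on UNIV
      \<and> (\<Sum>\<^sub>\<infinity>k. L (u - t k) * \<bar>u - t k\<bar> powr \<beta>\<^sub>0) \<le> M)"

definition m0_finite :: "(int \<Rightarrow> real) \<Rightarrow> (real \<Rightarrow> real) \<Rightarrow> bool" where
  "m0_finite t L \<longleftrightarrow> (\<exists>M. \<forall>u. (\<lambda>k. L (u - t k)) summable_on UNIV
      \<and> (\<Sum>\<^sub>\<infinity>k. L (u - t k)) \<le> M)"

definition m0 :: "(int \<Rightarrow> real) \<Rightarrow> (real \<Rightarrow> real) \<Rightarrow> real" where
  "m0 t L = (SUP u. (\<Sum>\<^sub>\<infinity>k. L (u - t k)))"

definition condH :: "(real \<Rightarrow> real) \<Rightarrow> (real \<Rightarrow> real) \<Rightarrow> (real \<Rightarrow> real) \<Rightarrow> bool" where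
  "condH \<phi> \<psi> \<eta> \<longleftrightarrow> phi_function \<eta> \<and>
     (\<forall>c. 0 < c \<and> c < 1 \<longrightarrow> (\<exists>C. 0 < C \<and> C < 1 \<and>
        (\<forall>u\<ge>0. \<phi> (C * \<psi> u) \<le> \<eta> (c * u))))"

definition S_op :: "(int \<Rightarrow> real) \<Rightarrow> (real \<Rightarrow> real \<Rightarrow> real) \<Rightarrow> real
     \<Rightarrow> (real \<Rightarrow> real) \<Rightarrow> real \<Rightarrow> real" where
  "S_op t K w f x = (\<Sum>\<^sub>\<infinity>k. K (w * x - t k)
      ((w / (t (k+1) - t k)) * (LINT u:{t k / w .. t (k+1) / w}|lebesgue. f u)))"

definition modulus :: "(real \<Rightarrow> real) \<Rightarrow> real \<Rightarrow> (real \<Rightarrow> real) \<Rightarrow> real \<Rightarrow> ennreal" where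
  "modulus \<eta> c f d = (SUP s\<in>{-d..d}. modular \<eta> (\<lambda>x. c * (f (x + s) - f x)))"

end

theory Submission
  imports Defs "HOL-Probability.Probability_Measure"
begin


lemma aff_meas: fixes c t :: real assumes "c \<noteq> 0"
  shows "(\<lambda>x. t + c * x) \<in> lebesgue \<rightarrow>\<^sub>M lebesgue"
  using lebesgue_affine_measurable[where c="\<lambda>_::real. c" and t=t] assms by simp

lemma cvx:
  fixes f :: "real \<Rightarrow> real"
  assumes "convex_on A f" "0 \<le> t" "t \<le> 1" "x \<in> A" "y \<in> A"
  shows "f ((1 - t) * x + t * y) \<le> (1 - t) * f x + t * f y"
  using convex_onD[OF assms(1)] assms(2-) by simp

lemma convex_abs_comp:
  fixes \<eta> :: "real \<Rightarrow> real"
  assumes "convex_on {0..} \<eta>" "mono_on {0..} \<eta>"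
  shows "convex_on UNIV (\<lambda>v. \<eta> \<bar>c * v\<bar>)"
proof (rule convex_onI)
  show "convex (UNIV::real set)" by simp
next
  fix t x y :: real assume t: "0 < t" "t < 1"
  have "\<bar>c * ((1 - t) * x + t * y)\<bar> \<le> (1 - t) * \<bar>c * x\<bar> + t * \<bar>c * y\<bar>"
  proof -
    have "\<bar>c * ((1 - t) * x + t * y)\<bar> = \<bar>(1 - t) * (c * x) + t * (c * y)\<bar>" by (simp add: algebra_simps)
    also have "\<dots> \<le> \<bar>(1 - t) * (c * x)\<bar> + \<bar>t * (c * y)\<bar>" by (rule abs_triangle_ineq)
    also have "\<dots> = (1 - t) * \<bar>c * x\<bar> + t * \<bar>c * y\<bar>" using t by (simp add: abs_mult)
    finally show ?thesis .
  qed
  then have "\<eta> \<bar>c * ((1 - t) * x + t * y)\<bar> \<le> \<eta> ((1 - t) * \<bar>c * x\<bar> + t * \<bar>c * y\<bar>)"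
    using assms(2) t by (intro mono_onD[OF assms(2)]) auto
  also have "\<dots> \<le> (1 - t) * \<eta> \<bar>c * x\<bar> + t * \<eta> \<bar>c * y\<bar>"
    using assms(1) t by (intro cvx[OF assms(1)]) auto
  finally show "\<eta> \<bar>c * ((1 - t) *\<^sub>R x + t *\<^sub>R y)\<bar> \<le> (1 - t) * \<eta> \<bar>c * x\<bar> + t * \<eta> \<bar>c * y\<bar>" by simp
qed

lemma cont_abs_comp:
  fixes \<eta> :: "real \<Rightarrow> real"
  assumes "continuous_on {0..} \<eta>"
  shows "continuous_on UNIV (\<lambda>v. \<eta> \<bar>c * v\<bar>)"
proof -
  have "continuous_on UNIV (\<lambda>v. \<bar>c * v\<bar>)" by (intro continuous_intros)
  moreover have "(\<lambda>v. \<bar>c * v\<bar>) ` UNIV \<subseteq> {0..}" by auto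
  ultimately show ?thesis using continuous_on_compose2[OF assms] by blast
qed

lemma phi_nonneg: assumes "phi_function \<phi>" "u \<ge> 0" shows "\<phi> u \<ge> 0"
  using assms unfolding phi_function_def by (metis atLeast_iff mono_onD order_refl)

lemma phi_mono: assumes "phi_function \<phi>" "0 \<le> a" "a \<le> b" shows "\<phi> a \<le> \<phi> b"
  using assms unfolding phi_function_def by (meson atLeast_iff mono_onD order_trans)

lemma convex_scale_le:
  fixes \<phi> :: "real \<Rightarrow> real"
  assumes "convex_on {0..} \<phi>" "\<phi> 0 = 0" "0 \<le> s" "s \<le> 1" "0 \<le> v"
  shows "\<phi> (s * v) \<le> s * \<phi> v"
proof -
  have "\<phi> ((1 - s) * 0 + s * v) \<le> (1 - s) * \<phi> 0 + s * \<phi> v"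
    using assms by (intro cvx[OF assms(1)]) auto
  then show ?thesis using assms by simp
qed

lemma convex3:
  fixes \<phi> :: "real \<Rightarrow> real"
  assumes "convex_on {0..} \<phi>" "0 \<le> a" "0 \<le> b" "0 \<le> c"
  shows "\<phi> ((a + b + c) / 3) \<le> (\<phi> a + \<phi> b + \<phi> c) / 3"
proof -
  have 1: "\<phi> ((b + c) / 2) \<le> (\<phi> b + \<phi> c) / 2"
    using cvx[OF assms(1), of "1/2" b c] assms by (auto simp: field_simps)
  have e: "(1 - 2/3) * a + (2/3) * ((b + c) / 2) = (a + b + c) / 3" by simp
  have "\<phi> ((1 - 2/3) * a + (2/3) * ((b + c) / 2)) \<le> (1 - 2/3) * \<phi> a + (2/3) * \<phi> ((b + c) / 2)"
    using assms by (intro cvx[OF assms(1)]) auto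
  then have "\<phi> ((a + b + c) / 3) \<le> (1 - 2/3) * \<phi> a + (2/3) * \<phi> ((b + c) / 2)"
    unfolding e .
  then show ?thesis using 1 by simp
qed

lemma jensen_fin:
  fixes p y :: "'a \<Rightarrow> real" and \<phi> :: "real \<Rightarrow> real"
  assumes cv: "convex_on {0..} \<phi>" and p0: "\<phi> 0 = 0" and F: "finite F"
    and p: "\<And>k. k \<in> F \<Longrightarrow> 0 \<le> p k" and y: "\<And>k. k \<in> F \<Longrightarrow> 0 \<le> y k"
    and m: "sum p F \<le> m"
  shows "\<phi> (\<Sum>k\<in>F. p k * y k) \<le> (\<Sum>k\<in>F. (p k / m) * \<phi> (m * y k))"
proof (cases "sum p F = 0")
  case True
  then have "\<forall>k\<in>F. p k = 0" using sum_nonneg_eq_0_iff[OF F] p by blast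
  then show ?thesis using p0 by simp
next
  case False
  define s where "s = sum p F / m"
  have sp: "sum p F > 0" using False sum_nonneg[of F p] p by force
  then have m0: "m > 0" using m by linarith
  have s01: "0 < s" "s \<le> 1" using sp m m0 by (auto simp: s_def field_simps)
  have Fne: "F \<noteq> {}" using False by auto
  have w1: "(\<Sum>k\<in>F. p k / sum p F) = 1" using sp by (simp add: sum_divide_distrib[symmetric])
  have "s * (\<Sum>k\<in>F. (p k / sum p F) * (m * y k)) = (\<Sum>k\<in>F. s * ((p k / sum p F) * (m * y k)))"
    by (simp add: sum_distrib_left)
  also have "\<dots> = (\<Sum>k\<in>F. p k * y k)"
    using sp m0 by (intro sum.cong) (auto simp: s_def field_simps)
  finally have "(\<Sum>k\<in>F. p k * y k) = s * (\<Sum>k\<in>F. (p k / sum p F) * (m * y k))" by simp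
  moreover have "\<phi> (s * (\<Sum>k\<in>F. (p k / sum p F) * (m * y k))) \<le> s * \<phi> (\<Sum>k\<in>F. (p k / sum p F) * (m * y k))"
    using s01 y p m0 sp by (intro convex_scale_le[OF cv p0]) (auto intro!: sum_nonneg)
  moreover have "\<phi> (\<Sum>k\<in>F. (p k / sum p F) * (m * y k)) \<le> (\<Sum>k\<in>F. (p k / sum p F) * \<phi> (m * y k))"
    using convex_on_sum[OF F Fne cv, of "\<lambda>k. p k / sum p F" "\<lambda>k. m * y k"] w1 p y sp m0
    by auto
  moreover have "s * (\<Sum>k\<in>F. (p k / sum p F) * \<phi> (m * y k)) = (\<Sum>k\<in>F. (p k / m) * \<phi> (m * y k))"
    unfolding sum_distrib_left using sp m0 by (intro sum.cong) (auto simp: s_def field_simps)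
  ultimately show ?thesis using s01
    by (metis (no_types, lifting) mult_left_mono order_trans less_imp_le)
qed



lemma jensen_int:
  fixes G q :: "real \<Rightarrow> real"
  assumes l: "0 < l" and Gi: "set_integrable lborel {0..<l} G"
    and Gm[measurable]: "G \<in> borel_measurable borel"
    and cq: "convex_on UNIV q" and q0: "\<And>v. 0 \<le> q v"
  shows "ennreal (q ((1/l) * (LINT y:{0..<l}|lborel. G y)))
     \<le> ennreal (1/l) * (\<integral>\<^sup>+ y. indicator {0..<l} y * ennreal (q (G y)) \<partial>lborel)"
proof -
  have "continuous_on UNIV q" using cq by (intro convex_on_continuous) auto
  then have qm[measurable]: "q \<in> borel_measurable borel" by (rule borel_measurable_continuous_onI)
  define d where "d y = indicator {0..<l} y / l" for y :: real
  have dm[measurable]: "d \<in> borel_measurable borel" unfolding d_def by measurable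
  have d0: "\<And>y. 0 \<le> d y" using l by (auto simp: d_def)
  define N where "N = density lborel (\<lambda>y. ennreal (d y))"
  have "emeasure N (space N) = (\<integral>\<^sup>+ y. ennreal (d y) \<partial>lborel)"
    unfolding N_def by (simp add: emeasure_density)
  also have "\<dots> = (\<integral>\<^sup>+ y. ennreal (1/l) * indicator {0..<l} y \<partial>lborel)"
    by (intro nn_integral_cong) (auto simp: d_def indicator_def)
  also have "\<dots> = ennreal (1/l) * ennreal l"
    using l by (subst nn_integral_cmult_indicator) auto
  also have "\<dots> = 1" using l by (simp add: ennreal_mult'[symmetric])
  finally have "prob_space N" by (intro prob_spaceI) simp
  show ?thesis
  proof (cases "(\<integral>\<^sup>+ y. indicator {0..<l} y * ennreal (q (G y)) \<partial>lborel) = \<infinity>")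
    case True
    then show ?thesis using l by (simp add: ennreal_mult_top)
  next
    case False
    have eqn: "(\<lambda>y. indicator {0..<l} y * ennreal (q (G y))) = (\<lambda>y. ennreal (indicator {0..<l} y * q (G y)))"
      by (auto simp: indicator_def)
    have iq: "integrable lborel (\<lambda>y. indicator {0..<l} y * q (G y))"
      using False q0 by (intro integrableI_nonneg) (auto simp: eqn top.not_eq_extremum)
    have iG: "integrable lborel (\<lambda>y. indicator {0..<l} y * G y)"
      using Gi by (simp add: set_integrable_def)
    have iNG: "integrable N G" unfolding N_def
      using iG d0 by (subst integrable_density) (auto simp: d_def)
    have iNq: "integrable N (\<lambda>y. q (G y))" unfolding N_def
      using iq d0 by (subst integrable_density) (auto simp: d_def)
    have EG: "integral\<^sup>L N G = (1/l) * (LINT y:{0..<l}|lborel. G y)"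
      unfolding N_def using d0 iG
      by (subst integral_density) (auto simp: d_def set_lebesgue_integral_def)
    have Eq: "integral\<^sup>L N (\<lambda>y. q (G y)) = (1/l) * (\<integral>y. indicator {0..<l} y * q (G y) \<partial>lborel)"
      unfolding N_def using d0 iq
      by (subst integral_density) (auto simp: d_def)
    have J: "q (integral\<^sup>L N G) \<le> integral\<^sup>L N (\<lambda>y. q (G y))"
      by (rule prob_space.jensens_inequality[OF \<open>prob_space N\<close> iNG _ _ iNq, of UNIV 0 0]) (auto simp: cq)
    have "(\<integral>\<^sup>+ y. indicator {0..<l} y * ennreal (q (G y)) \<partial>lborel) = ennreal (\<integral>y. indicator {0..<l} y * q (G y) \<partial>lborel)"
      unfolding eqn using iq q0 by (intro nn_integral_eq_integral) auto
    moreover have "0 \<le> (\<integral>y. indicator {0..<l} y * q (G y) \<partial>lborel)"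
      using q0 by (intro integral_nonneg_AE) auto
    ultimately show ?thesis using J EG Eq l
      by (simp add: ennreal_mult'[symmetric] ennreal_leI)
  qed
qed

lemma set_int_shift:
  fixes f :: "real \<Rightarrow> real"
  assumes [measurable]: "f \<in> borel_measurable borel" and ab: "a \<le> b"
  shows "(LINT u:{a..b}|lebesgue. f u) = (LINT y:{0..<b-a}|lborel. f (a + y))"
proof -
  have "(LINT u:{a..b}|lebesgue. f u) = (LINT u:{a..b}|lborel. f u)"
    unfolding set_lebesgue_integral_def by (rule integral_completion) measurable
  also have "\<dots> = (LINT u:{a..<b}|lborel. f u)"
  proof (rule set_integral_cong_set[symmetric])
    show "AE x in lborel. (x \<in> {a..b}) = (x \<in> {a..<b})"
      using AE_lborel_singleton[of b] by eventually_elim auto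
  qed (auto simp: set_borel_measurable_def)
  also have "\<dots> = (\<integral>u. indicator {a..<b} u * f u \<partial>lborel)"
    by (simp add: set_lebesgue_integral_def)
  also have "\<dots> = (\<integral>y. indicator {a..<b} (a + 1 * y) * f (a + 1 * y) \<partial>lborel)"
    using lborel_integral_real_affine[of 1 "\<lambda>u. indicator {a..<b} u * f u" a] by simp
  also have "\<dots> = (\<integral>y. indicator {0..<b-a} y * f (a + y) \<partial>lborel)"
    by (intro Bochner_Integration.integral_cong) (auto simp: indicator_def)
  finally show ?thesis by (simp add: set_lebesgue_integral_def)
qed

lemma set_integrable_shift:
  fixes f :: "real \<Rightarrow> real"
  assumes "\<And>a b. set_integrable lborel {a..b} f" "0 \<le> l"
  shows "set_integrable lborel {0..<l} (\<lambda>y. f (a + y))"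
proof -
  have "set_integrable lborel {a..<a+l} f"
    by (rule set_integrable_subset[OF assms(1)[of a "a+l"]]) auto
  then have "integrable lborel (\<lambda>y. indicator {a..<a+l} (a + 1 * y) *\<^sub>R f (a + 1 * y))"
    unfolding set_integrable_def by (rule lborel_integrable_real_affine) simp
  also have "(\<lambda>y. indicator {a..<a+l} (a + 1 * y) *\<^sub>R f (a + 1 * y)) = (\<lambda>y. indicator {0..<l} y *\<^sub>R f (a + y))"
    by (auto simp: indicator_def fun_eq_iff)
  finally show ?thesis by (simp add: set_integrable_def)
qed

lemma loc_int:
  fixes f \<phi> :: "real \<Rightarrow> real"
  assumes [measurable]: "f \<in> borel_measurable borel" and c: "0 < c"
    and pf: "phi_function \<phi>" and cv: "convex_on {0..} \<phi>"
    and fin: "(\<integral>\<^sup>+x. ennreal (\<phi> \<bar>c * f x\<bar>) \<partial>lborel) < \<infinity>"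
  shows "set_integrable lborel {a..b} f"
proof -
  have p0: "\<phi> 0 = 0" and p1: "\<phi> 1 > 0" using pf by (auto simp: phi_function_def)
  have "continuous_on UNIV (\<lambda>v. \<phi> \<bar>c * v\<bar>)" using pf by (intro cont_abs_comp) (auto simp: phi_function_def)
  then have [measurable]: "(\<lambda>v. \<phi> \<bar>c * v\<bar>) \<in> borel_measurable borel" by (rule borel_measurable_continuous_onI)
  have key: "\<bar>f x\<bar> \<le> (1/c) * (1 + \<phi> \<bar>c * f x\<bar> / \<phi> 1)" for x
  proof -
    define v where "v = \<bar>c * f x\<bar>"
    have v0: "0 \<le> v" by (simp add: v_def)
    have pv: "0 \<le> \<phi> v" using phi_nonneg[OF pf v0] .
    have "v \<le> 1 + \<phi> v / \<phi> 1"
    proof (cases "v \<le> 1")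
      case True then show ?thesis using pv p1 by (smt (verit) divide_nonneg_pos)
    next
      case False
      have "\<phi> ((1/v) * v) \<le> (1/v) * \<phi> v"
        using False by (intro convex_scale_le[OF cv p0]) auto
      then have "\<phi> 1 \<le> \<phi> v / v" using False by simp
      then have "v * \<phi> 1 \<le> \<phi> v" using False by (simp add: field_simps)
      then have "v \<le> \<phi> v / \<phi> 1" using p1 by (simp add: field_simps)
      then show ?thesis by simp
    qed
    then have "c * \<bar>f x\<bar> \<le> 1 + \<phi> \<bar>c * f x\<bar> / \<phi> 1" using c by (simp add: v_def abs_mult)
    then show ?thesis using c by (simp add: field_simps)
  qed
  have i1: "integrable lborel (\<lambda>x. \<phi> \<bar>c * f x\<bar>)"
    using fin phi_nonneg[OF pf] by (intro integrableI_nonneg) auto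
  have i2: "integrable lborel (\<lambda>x. (1/c) * (indicator {a..b} x + \<phi> \<bar>c * f x\<bar> / \<phi> 1))"
  proof -
    have "integrable lborel (indicator {a..b} :: real \<Rightarrow> real)"
      by (cases "a \<le> b") auto
    then show ?thesis
      using i1 by (intro integrable_mult_right Bochner_Integration.integrable_add integrable_divide) auto
  qed
  show ?thesis unfolding set_integrable_def
  proof (rule Bochner_Integration.integrable_bound[OF i2])
    show "AE x in lborel. norm (indicator {a..b} x *\<^sub>R f x) \<le> norm ((1/c) * (indicator {a..b} x + \<phi> \<bar>c * f x\<bar> / \<phi> 1))"
    proof (rule AE_I2)
      fix x
      have n: "0 \<le> \<phi> \<bar>c * f x\<bar> / \<phi> 1" using phi_nonneg[OF pf] p1 by simp
      show "norm (indicator {a..b} x *\<^sub>R f x) \<le> norm ((1/c) * (indicator {a..b} x + \<phi> \<bar>c * f x\<bar> / \<phi> 1))"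
      proof (cases "x \<in> {a..b}")
        case True then show ?thesis using key[of x] c n by (simp add: abs_mult)
      next
        case False then show ?thesis using c n by (simp add: abs_mult)
      qed
    qed
  qed measurable
qed



lemma ss_gap:
  assumes ss: "sampling_sequence t \<delta> \<Delta>" and ij: "i \<le> j"
  shows "t j - t i \<ge> \<delta> * of_int (j - i)"
proof -
  have g: "\<And>k. \<delta> \<le> t (k+1) - t k" using ss by (auto simp: sampling_sequence_def)
  have "\<And>n::nat. t (i + int n) - t i \<ge> \<delta> * of_nat n"
  proof -
    fix n :: nat show "t (i + int n) - t i \<ge> \<delta> * of_nat n"
    proof (induction n)
      case 0 then show ?case by simp
    next
      case (Suc n)
      have "t (i + int (Suc n)) - t i = (t (i + int n + 1) - t (i + int n)) + (t (i + int n) - t i)"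
        by (simp add: algebra_simps)
      also have "\<dots> \<ge> \<delta> + \<delta> * of_nat n" using g[of "i + int n"] Suc by linarith
      finally show ?case by (simp add: algebra_simps)
    qed
  qed
  from this[of "nat (j - i)"] ij show ?thesis by simp
qed

lemma ss_mono_le:
  assumes ss: "sampling_sequence t \<delta> \<Delta>" and ij: "i \<le> j"
  shows "t i \<le> t j"
  using ss_gap[OF ss ij] ss ij by (smt (verit, ccfv_SIG) mult_nonneg_nonneg of_int_nonneg sampling_sequence_def)

lemma finite_near:
  assumes ss: "sampling_sequence t \<delta> \<Delta>"
  shows "finite {k. \<bar>c - t k\<bar> \<le> r}"
proof -
  have d: "\<delta> > 0" using ss by (auto simp: sampling_sequence_def)
  define B where "B = \<bar>c - t 0\<bar> + r"
  define N where "N = \<lceil>B / \<delta>\<rceil>"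
  have "{k. \<bar>c - t k\<bar> \<le> r} \<subseteq> {-N..N}"
  proof
    fix k assume "k \<in> {k. \<bar>c - t k\<bar> \<le> r}"
    then have k: "\<bar>c - t k\<bar> \<le> r" by simp
    have tb: "\<bar>t k - t 0\<bar> \<le> B" using k unfolding B_def by linarith
    have "\<delta> * \<bar>of_int k\<bar> \<le> B"
    proof (cases "0 \<le> k")
      case True
      then show ?thesis using ss_gap[OF ss True] tb by simp
    next
      case False
      then have "k \<le> 0" by simp
      then show ?thesis using ss_gap[OF ss \<open>k \<le> 0\<close>] tb False by simp
    qed
    then have "\<bar>of_int k\<bar> \<le> B / \<delta>" using d by (simp add: field_simps)
    then have "\<bar>real_of_int k\<bar> \<le> real_of_int N" unfolding N_def by (meson le_of_int_ceiling order_trans)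
    then have "\<bar>k\<bar> \<le> N" by linarith
    then show "k \<in> {-N..N}" by auto
  qed
  then show ?thesis by (rule finite_subset) simp
qed

lemma interval_unique:
  assumes ss: "sampling_sequence t \<delta> \<Delta>" and w: "w > 0"
    and k: "t k / w \<le> z" "z < t (k+1) / w" and k': "t k' / w \<le> z" "z < t (k'+1) / w"
  shows "k = k'"
proof (rule ccontr)
  assume "k \<noteq> k'"
  then consider "k + 1 \<le> k'" | "k' + 1 \<le> k" by linarith
  then show False
  proof cases
    case 1
    then have "t (k+1) \<le> t k'" by (rule ss_mono_le[OF ss])
    then have "t (k+1) / w \<le> t k' / w" using w by (simp add: divide_right_mono)
    then show False using k k' by linarith
  next
    case 2
    then have "t (k'+1) \<le> t k" by (rule ss_mono_le[OF ss])
    then have "t (k'+1) / w \<le> t k / w" using w by (simp add: divide_right_mono)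
    then show False using k k' by linarith
  qed
qed

lemma count_indicator_le:
  assumes ss: "sampling_sequence t \<delta> \<Delta>" and w: "w > 0"
  shows "(\<integral>\<^sup>+k. indicator {t k / w ..< t (k+1) / w} z * E \<partial>count_space UNIV) \<le> (E::ennreal)"
proof (cases "\<exists>k0. z \<in> {t k0 / w ..< t (k0+1) / w}")
  case True
  then obtain k0 where k0: "z \<in> {t k0 / w ..< t (k0+1) / w}" by blast
  have "(\<integral>\<^sup>+k. indicator {t k / w ..< t (k+1) / w} z * E \<partial>count_space UNIV)
      = (\<Sum>k\<in>{k0}. indicator {t k / w ..< t (k+1) / w} z * E)"
  proof (rule nn_integral_count_space')
    fix k assume "k \<in> UNIV" "k \<notin> {k0}"
    then have "k \<noteq> k0" by simp
    then have "z \<notin> {t k / w ..< t (k+1) / w}" using interval_unique[OF ss w] k0 by auto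
    then show "indicator {t k / w ..< t (k+1) / w} z * E = 0" by simp
  qed auto
  also have "\<dots> = E" using k0 by simp
  finally show ?thesis by simp
next
  case False
  then have "\<And>k. indicator {t k / w ..< t (k+1) / w} z * E = 0" by simp
  then have e: "(\<lambda>k. indicator {t k / w ..< t (k+1) / w} z * E) = (\<lambda>k. 0)" by (rule ext)
  have "(\<integral>\<^sup>+k. indicator {t k / w ..< t (k+1) / w} z * E \<partial>count_space UNIV) = 0"
    unfolding e by simp
  then show ?thesis by simp
qed

lemma nn_count_measurable:
  fixes H :: "int \<Rightarrow> 'a \<Rightarrow> ennreal"
  assumes "\<And>k. H k \<in> borel_measurable M"
  shows "(\<lambda>x. \<integral>\<^sup>+k. H k x \<partial>count_space UNIV) \<in> borel_measurable M"
proof -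
  have inf: "infinite (UNIV :: int set)" by (rule infinite_UNIV_int)
  note * = bij_betw_from_nat_into[OF countableI_type inf]
  have **: "\<And>x. (\<integral>\<^sup>+k. H k x \<partial>count_space UNIV) = (\<Sum>n. H (from_nat_into UNIV n) x)"
    by (simp add: nn_integral_bij_count_space[symmetric, OF *] nn_integral_count_space_nat)
  show ?thesis unfolding ** using assms by measurable
qed



lemma P_bound:
  fixes K :: "real \<Rightarrow> real \<Rightarrow> real" and L \<psi> \<phi> \<eta> :: "real \<Rightarrow> real"
    and z a b :: "int \<Rightarrow> real"
  assumes F: "finite F"
    and Lip: "\<And>x u v. \<bar>K x u - K x v\<bar> \<le> L x * \<psi> \<bar>u - v\<bar>"
    and Lnn: "\<And>x. 0 \<le> L x"
    and p\<psi>: "phi_function \<psi>" and p\<phi>: "phi_function \<phi>" and cv\<phi>: "convex_on {0..} \<phi>"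
    and Lsum: "(\<Sum>k\<in>F. L (z k)) \<le> m"
    and mu: "0 < \<mu>" "3 * \<mu> * m \<le> Cc"
    and H: "\<And>u. 0 \<le> u \<Longrightarrow> \<phi> (Cc * \<psi> u) \<le> \<eta> ((1/2) * u)"
  shows "\<phi> (3 * \<mu> * \<bar>\<Sum>k\<in>F. (K (z k) (a k) - K (z k) (b k))\<bar>)
     \<le> (\<Sum>k\<in>F. (L (z k) / m) * \<eta> \<bar>(1/2) * (a k - b k)\<bar>)"
proof -
  have p0: "\<phi> 0 = 0" using p\<phi> by (simp add: phi_function_def)
  have m0: "0 \<le> m" using Lsum sum_nonneg[of F "\<lambda>k. L (z k)"] Lnn by (meson order_trans)
  have ps: "\<And>k. 0 \<le> \<psi> \<bar>a k - b k\<bar>" using phi_nonneg[OF p\<psi>] by simp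
  have "\<bar>\<Sum>k\<in>F. (K (z k) (a k) - K (z k) (b k))\<bar> \<le> (\<Sum>k\<in>F. \<bar>K (z k) (a k) - K (z k) (b k)\<bar>)"
    by (rule sum_abs)
  also have "\<dots> \<le> (\<Sum>k\<in>F. L (z k) * \<psi> \<bar>a k - b k\<bar>)"
    by (intro sum_mono Lip)
  finally have "3 * \<mu> * \<bar>\<Sum>k\<in>F. (K (z k) (a k) - K (z k) (b k))\<bar> \<le> 3 * \<mu> * (\<Sum>k\<in>F. L (z k) * \<psi> \<bar>a k - b k\<bar>)"
    using mu by simp
  also have "\<dots> = (\<Sum>k\<in>F. L (z k) * (3 * \<mu> * \<psi> \<bar>a k - b k\<bar>))"
    by (simp add: sum_distrib_left algebra_simps)
  finally have 1: "3 * \<mu> * \<bar>\<Sum>k\<in>F. (K (z k) (a k) - K (z k) (b k))\<bar> \<le> (\<Sum>k\<in>F. L (z k) * (3 * \<mu> * \<psi> \<bar>a k - b k\<bar>))" .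
  have "\<phi> (3 * \<mu> * \<bar>\<Sum>k\<in>F. (K (z k) (a k) - K (z k) (b k))\<bar>) \<le> \<phi> (\<Sum>k\<in>F. L (z k) * (3 * \<mu> * \<psi> \<bar>a k - b k\<bar>))"
    using mu by (intro phi_mono[OF p\<phi> _ 1]) auto
  also have "\<dots> \<le> (\<Sum>k\<in>F. (L (z k) / m) * \<phi> (m * (3 * \<mu> * \<psi> \<bar>a k - b k\<bar>)))"
    using mu ps Lnn by (intro jensen_fin[OF cv\<phi> p0 F _ _ Lsum]) auto
  also have "\<dots> \<le> (\<Sum>k\<in>F. (L (z k) / m) * \<eta> \<bar>(1/2) * (a k - b k)\<bar>)"
  proof (rule sum_mono)
    fix k assume "k \<in> F"
    have "m * (3 * \<mu> * \<psi> \<bar>a k - b k\<bar>) = (3 * \<mu> * m) * \<psi> \<bar>a k - b k\<bar>" by simp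
    also have "\<dots> \<le> Cc * \<psi> \<bar>a k - b k\<bar>" using mu ps[of k] by (intro mult_right_mono) auto
    finally have "\<phi> (m * (3 * \<mu> * \<psi> \<bar>a k - b k\<bar>)) \<le> \<phi> (Cc * \<psi> \<bar>a k - b k\<bar>)"
      using m0 mu ps[of k] by (intro phi_mono[OF p\<phi>]) auto
    also have "\<dots> \<le> \<eta> ((1/2) * \<bar>a k - b k\<bar>)" by (rule H) simp
    also have "\<dots> = \<eta> \<bar>(1/2) * (a k - b k)\<bar>" by (simp add: abs_mult)
    finally show "(L (z k) / m) * \<phi> (m * (3 * \<mu> * \<psi> \<bar>a k - b k\<bar>)) \<le> (L (z k) / m) * \<eta> \<bar>(1/2) * (a k - b k)\<bar>"
      using Lnn m0 by (intro mult_left_mono) auto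
  qed
  finally show ?thesis .
qed

lemma ennreal_sum_mult:
  assumes "\<And>k. k \<in> F \<Longrightarrow> 0 \<le> g k" "\<And>k. k \<in> F \<Longrightarrow> 0 \<le> h k"
  shows "ennreal (\<Sum>k\<in>F. g k * h k) = (\<Sum>k\<in>F. ennreal (g k) * ennreal (h k))"
proof -
  have "ennreal (\<Sum>k\<in>F. g k * h k) = (\<Sum>k\<in>F. ennreal (g k * h k))"
    using assms by (subst sum_ennreal) auto
  also have "\<dots> = (\<Sum>k\<in>F. ennreal (g k) * ennreal (h k))"
    using assms by (intro sum.cong refl) (simp add: ennreal_mult')
  finally show ?thesis .
qed

lemma si_const:
  assumes "0 \<le> l" shows "set_integrable lborel {0..<l::real} (\<lambda>y. c::real)"
proof -
  have "integrable lborel (indicator {0..<l} :: real \<Rightarrow> real)" using assms by auto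
  then have "integrable lborel (\<lambda>y. indicator {0..<l} y * c :: real)" by (rule integrable_mult_left)
  then show ?thesis unfolding set_integrable_def by simp
qed

locale setting =
  fixes t :: "int \<Rightarrow> real" and \<delta> \<Delta> \<theta> :: real and K :: "real \<Rightarrow> real \<Rightarrow> real"
    and L \<psi> \<phi> \<eta> f :: "real \<Rightarrow> real" and R C0 W0 Cc \<mu> m :: real
  assumes ss: "sampling_sequence t \<delta> \<Delta>"
    and Lip: "\<And>x u v. \<bar>K x u - K x v\<bar> \<le> L x * \<psi> \<bar>u - v\<bar>"
    and K0: "\<And>x. K x 0 = 0"
    and Lnn: "\<And>x. 0 \<le> L x"
    and Rpos: "0 < R" and Lsupp: "\<And>x. R < \<bar>x\<bar> \<Longrightarrow> L x = 0"
    and p\<psi>: "phi_function \<psi>" and p\<phi>: "phi_function \<phi>" and cv\<phi>: "convex_on {0..} \<phi>"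
    and p\<eta>: "phi_function \<eta>" and cv\<eta>: "convex_on {0..} \<eta>"
    and H: "\<And>u. 0 \<le> u \<Longrightarrow> \<phi> (Cc * \<psi> u) \<le> \<eta> ((1/2) * u)"
    and Cc: "0 < Cc"
    and chi4: "\<And>w x u. W0 \<le> w \<Longrightarrow> u \<noteq> 0 \<Longrightarrow>
        \<bar>(1 / u) * (\<Sum>\<^sub>\<infinity>k. K (w * x - t k) u) - 1\<bar> \<le> C0 * w powr (- \<theta>)"
    and C0: "1 \<le> C0" and \<theta>: "0 < \<theta>"
    and Lsum: "\<And>u F. finite F \<Longrightarrow> (\<Sum>k\<in>F. L (u - t k)) \<le> m"
    and mu: "0 < \<mu>" "3 * \<mu> * m \<le> Cc"
    and fm[measurable]: "f \<in> borel_measurable borel"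
    and fi: "\<And>a b. set_integrable lborel {a..b} f"
    and Lm: "L \<in> borel_measurable lebesgue" and Li: "integrable lebesgue L"
begin

lemma dpos: "0 < \<delta>" and dgap: "\<And>k. \<delta> \<le> t (k+1) - t k" and Dgap: "\<And>k. t (k+1) - t k \<le> \<Delta>"
  using ss by (auto simp: sampling_sequence_def)

lemma m_nonneg: "0 \<le> m"
  using Lsum[of "{}"] by simp

lemma q_convex: "convex_on UNIV (\<lambda>v. \<eta> \<bar>(1/2) * v\<bar>)"
  using p\<eta> cv\<eta> by (intro convex_abs_comp) (auto simp: phi_function_def)

lemma q_nonneg: "0 \<le> \<eta> \<bar>c * v\<bar>"
  using phi_nonneg[OF p\<eta>] by simp

lemma jensen_q:
  assumes "0 < l" "set_integrable lborel {0..<l} G" "G \<in> borel_measurable borel"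
  shows "ennreal (\<eta> \<bar>(1/2) * ((1/l) * (LINT y:{0..<l}|lborel. G y))\<bar>)
     \<le> ennreal (1/l) * (\<integral>\<^sup>+ y. indicator {0..<l} y * ennreal (\<eta> \<bar>(1/2) * G y\<bar>) \<partial>lborel)"
  by (rule jensen_int[OF assms q_convex q_nonneg])

lemma pointwise:
  assumes w: "1 \<le> w" "W0 \<le> w"
  shows "ennreal (\<phi> \<bar>\<mu> * (S_op t K w f x - f x)\<bar>) \<le> ennreal (1/3) * (
      (\<integral>\<^sup>+k. ennreal (L (w * x - t k) / m * (w / (t (k+1) - t k))) *
         (\<integral>\<^sup>+y. indicator {0..<(t (k+1) - t k) / w} y * ennreal (\<eta> \<bar>(1/2) * (f (t k / w + y) - f (x + y))\<bar>) \<partial>lborel) \<partial>count_space UNIV)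
    + ennreal (w / \<delta>) * (\<integral>\<^sup>+y. indicator {0..\<Delta>/w} y * ennreal (\<eta> \<bar>(1/2) * (f (x + y) - f x)\<bar>) \<partial>lborel)
    + ennreal (w powr (- \<theta>)) * ennreal (\<phi> \<bar>3 * \<mu> * C0 * f x\<bar>))"
proof -
  have wpos: "0 < w" using w by simp
  define F where "F = {k. \<bar>w * x - t k\<bar> \<le> R}"
  have Ffin: "finite F" unfolding F_def by (rule finite_near[OF ss])
  have Lz: "\<And>k. k \<notin> F \<Longrightarrow> L (w * x - t k) = 0" unfolding F_def by (intro Lsupp) auto
  have Kz: "\<And>k v. k \<notin> F \<Longrightarrow> K (w * x - t k) v = 0"
  proof -
    fix k v assume k: "k \<notin> F"
    have "\<bar>K (w * x - t k) v - K (w * x - t k) 0\<bar> \<le> L (w * x - t k) * \<psi> \<bar>v - 0\<bar>" by (rule Lip)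
    then show "K (w * x - t k) v = 0" using Lz[OF k] K0 by simp
  qed
  have isum: "\<And>g. (\<Sum>\<^sub>\<infinity>k. K (w * x - t k) (g k)) = (\<Sum>k\<in>F. K (w * x - t k) (g k))"
  proof -
    fix g :: "int \<Rightarrow> real"
    have "(\<Sum>\<^sub>\<infinity>k. K (w * x - t k) (g k)) = infsum (\<lambda>k. K (w * x - t k) (g k)) F"
      by (rule infsum_cong_neutral) (auto simp: Kz)
    then show "(\<Sum>\<^sub>\<infinity>k. K (w * x - t k) (g k)) = (\<Sum>k\<in>F. K (w * x - t k) (g k))" using Ffin by simp
  qed
  define l where "l k = (t (k+1) - t k) / w" for k
  have lpos: "\<And>k. 0 < l k"
  proof -
    fix k
    have "0 < t (k+1) - t k" using dgap[of k] dpos by linarith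
    then show "0 < l k" using wpos by (simp add: l_def)
  qed
  have lle: "\<And>k. l k \<le> \<Delta> / w" using Dgap wpos by (auto simp: l_def divide_right_mono)
  have linv: "\<And>k. 1 / l k = w / (t (k+1) - t k)" by (simp add: l_def)
  have linv_le: "\<And>k. 1 / l k \<le> w / \<delta>"
  proof -
    fix k
    have "0 < (t (k + 1) - t k) * \<delta>" using dgap[of k] dpos by (intro mult_pos_pos) auto
    then show "1 / l k \<le> w / \<delta>"
      unfolding linv using dgap dpos wpos by (intro divide_left_mono) auto
  qed
  define A where "A k = (w / (t (k+1) - t k)) * (LINT u:{t k / w .. t (k+1) / w}|lebesgue. f u)" for k
  define D where "D k = (1 / l k) * (LINT y:{0..<l k}|lborel. f (x + y))" for k
  have SA: "S_op t K w f x = (\<Sum>k\<in>F. K (w * x - t k) (A k))"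
    unfolding S_op_def A_def by (rule isum)
  have A_eq: "A k = (1 / l k) * (LINT y:{0..<l k}|lborel. f (t k / w + y))" for k
  proof -
    have le: "t k / w \<le> t (k+1) / w" using lpos[of k] wpos by (simp add: l_def diff_divide_distrib)
    have "t (k+1) / w - t k / w = l k" by (simp add: l_def diff_divide_distrib)
    then show ?thesis unfolding A_def linv using set_int_shift[OF fm le] by simp
  qed
  have si: "\<And>a k. set_integrable lborel {0..<l k} (\<lambda>y. f (a + y))"
    using lpos by (intro set_integrable_shift fi) (auto intro: less_imp_le)
  have AD: "A k - D k = (1 / l k) * (LINT y:{0..<l k}|lborel. (f (t k / w + y) - f (x + y)))" for k
    unfolding A_eq D_def using si by (simp add: set_integral_diff right_diff_distrib)
  have Df: "D k - f x = (1 / l k) * (LINT y:{0..<l k}|lborel. (f (x + y) - f x))" for k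
  proof -
    have c: "(LINT y:{0..<l k}|lborel. f x) = l k * f x"
      using lpos[of k] by (subst set_integral_const) (auto simp: less_imp_le)
    have ci: "set_integrable lborel {0..<l k} (\<lambda>y. f x)"
      using lpos[of k] by (intro si_const) (auto simp: less_imp_le)
    show ?thesis unfolding D_def using si ci c lpos[of k]
      by (simp add: set_integral_diff right_diff_distrib)
  qed
  define P1 where "P1 = (\<Sum>k\<in>F. (K (w * x - t k) (A k) - K (w * x - t k) (D k)))"
  define P2 where "P2 = (\<Sum>k\<in>F. (K (w * x - t k) (D k) - K (w * x - t k) (f x)))"
  define P3 where "P3 = (\<Sum>k\<in>F. K (w * x - t k) (f x)) - f x"
  have dec: "S_op t K w f x - f x = P1 + P2 + P3"
    unfolding SA P1_def P2_def P3_def by (simp add: sum_subtractf)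
  have LsF: "(\<Sum>k\<in>F. L (w * x - t k)) \<le> m" by (rule Lsum[OF Ffin])
  have split: "\<phi> \<bar>\<mu> * (S_op t K w f x - f x)\<bar> \<le> (\<phi> (3 * \<mu> * \<bar>P1\<bar>) + \<phi> (3 * \<mu> * \<bar>P2\<bar>) + \<phi> (3 * \<mu> * \<bar>P3\<bar>)) / 3"
  proof -
    have "\<bar>\<mu> * (S_op t K w f x - f x)\<bar> \<le> (3 * \<mu> * \<bar>P1\<bar> + 3 * \<mu> * \<bar>P2\<bar> + 3 * \<mu> * \<bar>P3\<bar>) / 3"
    proof -
      have "\<bar>P1 + P2 + P3\<bar> \<le> \<bar>P1\<bar> + \<bar>P2\<bar> + \<bar>P3\<bar>"
        using abs_triangle_ineq[of "P1+P2" P3] abs_triangle_ineq[of P1 P2] by linarith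
      then have "\<mu> * \<bar>P1 + P2 + P3\<bar> \<le> \<mu> * (\<bar>P1\<bar> + \<bar>P2\<bar> + \<bar>P3\<bar>)"
        using mu by (intro mult_left_mono) auto
      moreover have "\<bar>\<mu> * (P1 + P2 + P3)\<bar> = \<mu> * \<bar>P1 + P2 + P3\<bar>" using mu by (simp add: abs_mult)
      moreover have "\<mu> * (\<bar>P1\<bar> + \<bar>P2\<bar> + \<bar>P3\<bar>) = (3 * \<mu> * \<bar>P1\<bar> + 3 * \<mu> * \<bar>P2\<bar> + 3 * \<mu> * \<bar>P3\<bar>) / 3"
        by (simp add: algebra_simps)
      ultimately show ?thesis unfolding dec by simp
    qed
    then have "\<phi> \<bar>\<mu> * (S_op t K w f x - f x)\<bar> \<le> \<phi> ((3 * \<mu> * \<bar>P1\<bar> + 3 * \<mu> * \<bar>P2\<bar> + 3 * \<mu> * \<bar>P3\<bar>) / 3)"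
      by (intro phi_mono[OF p\<phi>]) auto
    also have "\<dots> \<le> (\<phi> (3 * \<mu> * \<bar>P1\<bar>) + \<phi> (3 * \<mu> * \<bar>P2\<bar>) + \<phi> (3 * \<mu> * \<bar>P3\<bar>)) / 3"
      using mu by (intro convex3[OF cv\<phi>]) auto
    finally show ?thesis .
  qed
  define J1 where "J1 k = (\<integral>\<^sup>+y. indicator {0..<(t (k+1) - t k) / w} y * ennreal (\<eta> \<bar>(1/2) * (f (t k / w + y) - f (x + y))\<bar>) \<partial>lborel)" for k
  have T1: "ennreal (\<phi> (3 * \<mu> * \<bar>P1\<bar>)) \<le> (\<integral>\<^sup>+k. ennreal (L (w * x - t k) / m * (w / (t (k+1) - t k))) * J1 k \<partial>count_space UNIV)"
  proof -
    have "\<phi> (3 * \<mu> * \<bar>P1\<bar>) \<le> (\<Sum>k\<in>F. (L (w * x - t k) / m) * \<eta> \<bar>(1/2) * (A k - D k)\<bar>)"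
      unfolding P1_def by (rule P_bound[where z="\<lambda>k. w * x - t k", OF Ffin Lip Lnn p\<psi> p\<phi> cv\<phi> LsF mu H])
    then have "ennreal (\<phi> (3 * \<mu> * \<bar>P1\<bar>)) \<le> ennreal (\<Sum>k\<in>F. (L (w * x - t k) / m) * \<eta> \<bar>(1/2) * (A k - D k)\<bar>)"
      by (rule ennreal_leI)
    also have "\<dots> = (\<Sum>k\<in>F. ennreal (L (w * x - t k) / m) * ennreal (\<eta> \<bar>(1/2) * (A k - D k)\<bar>))"
      using Lnn m_nonneg phi_nonneg[OF p\<eta>] by (intro ennreal_sum_mult) auto
    also have "\<dots> \<le> (\<Sum>k\<in>F. ennreal (L (w * x - t k) / m) * (ennreal (1 / l k) * J1 k))"
    proof (intro sum_mono mult_left_mono)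
      fix k
      have "ennreal (\<eta> \<bar>(1/2) * ((1 / l k) * (LINT y:{0..<l k}|lborel. (f (t k / w + y) - f (x + y))))\<bar>)
          \<le> ennreal (1 / l k) * (\<integral>\<^sup>+ y. indicator {0..<l k} y * ennreal (\<eta> \<bar>(1/2) * (f (t k / w + y) - f (x + y))\<bar>) \<partial>lborel)"
        using si by (intro jensen_q[OF lpos]) (auto intro!: set_integral_diff)
      then show "ennreal (\<eta> \<bar>(1/2) * (A k - D k)\<bar>) \<le> ennreal (1 / l k) * J1 k"
        unfolding AD J1_def l_def .
    qed auto
    also have "\<dots> = (\<Sum>k\<in>F. ennreal (L (w * x - t k) / m * (w / (t (k+1) - t k))) * J1 k)"
      unfolding linv by (intro sum.cong refl) (simp only: ennreal_mult'[OF divide_nonneg_nonneg[OF Lnn m_nonneg]] mult.assoc)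
    also have "\<dots> = (\<integral>\<^sup>+k. ennreal (L (w * x - t k) / m * (w / (t (k+1) - t k))) * J1 k \<partial>count_space UNIV)"
      by (rule nn_integral_count_space'[symmetric]) (auto simp: Ffin Lz)
    finally show ?thesis .
  qed
  define J2 where "J2 = (\<integral>\<^sup>+y. indicator {0..\<Delta>/w} y * ennreal (\<eta> \<bar>(1/2) * (f (x + y) - f x)\<bar>) \<partial>lborel)"
  have T2: "ennreal (\<phi> (3 * \<mu> * \<bar>P2\<bar>)) \<le> ennreal (w / \<delta>) * J2"
  proof -
    have "\<phi> (3 * \<mu> * \<bar>P2\<bar>) \<le> (\<Sum>k\<in>F. (L (w * x - t k) / m) * \<eta> \<bar>(1/2) * (D k - f x)\<bar>)"
      unfolding P2_def by (rule P_bound[where z="\<lambda>k. w * x - t k", OF Ffin Lip Lnn p\<psi> p\<phi> cv\<phi> LsF mu H])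
    then have "ennreal (\<phi> (3 * \<mu> * \<bar>P2\<bar>)) \<le> ennreal (\<Sum>k\<in>F. (L (w * x - t k) / m) * \<eta> \<bar>(1/2) * (D k - f x)\<bar>)"
      by (rule ennreal_leI)
    also have "\<dots> = (\<Sum>k\<in>F. ennreal (L (w * x - t k) / m) * ennreal (\<eta> \<bar>(1/2) * (D k - f x)\<bar>))"
      using Lnn m_nonneg phi_nonneg[OF p\<eta>] by (intro ennreal_sum_mult) auto
    also have "\<dots> \<le> (\<Sum>k\<in>F. ennreal (L (w * x - t k) / m) * (ennreal (w / \<delta>) * J2))"
    proof (intro sum_mono mult_left_mono)
      fix k
      have "ennreal (\<eta> \<bar>(1/2) * ((1 / l k) * (LINT y:{0..<l k}|lborel. (f (x + y) - f x)))\<bar>)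
          \<le> ennreal (1 / l k) * (\<integral>\<^sup>+ y. indicator {0..<l k} y * ennreal (\<eta> \<bar>(1/2) * (f (x + y) - f x)\<bar>) \<partial>lborel)"
        using si lpos[of k]
        by (intro jensen_q[OF lpos]) (auto intro!: set_integral_diff si_const simp: less_imp_le)
      also have "\<dots> \<le> ennreal (w / \<delta>) * J2"
      proof -
        have ii: "(\<integral>\<^sup>+ y. indicator {0..<l k} y * ennreal (\<eta> \<bar>(1/2) * (f (x + y) - f x)\<bar>) \<partial>lborel) \<le> J2"
          unfolding J2_def using lle[of k] by (intro nn_integral_mono) (auto simp: indicator_def)
        show ?thesis by (intro mult_mono ennreal_leI linv_le ii) auto
      qed
      finally show "ennreal (\<eta> \<bar>(1/2) * (D k - f x)\<bar>) \<le> ennreal (w / \<delta>) * J2"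
        unfolding Df .
    qed auto
    also have "\<dots> = (\<Sum>k\<in>F. ennreal (L (w * x - t k) / m)) * (ennreal (w / \<delta>) * J2)"
      by (rule sum_distrib_right[symmetric])
    also have "\<dots> = ennreal (\<Sum>k\<in>F. L (w * x - t k) / m) * (ennreal (w / \<delta>) * J2)"
      using Lnn m_nonneg by (subst sum_ennreal) auto
    also have "\<dots> \<le> 1 * (ennreal (w / \<delta>) * J2)"
    proof (intro mult_right_mono)
      have "(\<Sum>k\<in>F. L (w * x - t k) / m) \<le> 1"
      proof (cases "m = 0")
        case True then show ?thesis by simp
      next
        case False
        then have "0 < m" using m_nonneg by simp
        then show ?thesis using LsF by (simp add: sum_divide_distrib[symmetric])
      qed
      then show "ennreal (\<Sum>k\<in>F. L (w * x - t k) / m) \<le> 1" by (simp add: ennreal_le_1)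
    qed auto
    finally show ?thesis by simp
  qed
  have T3: "ennreal (\<phi> (3 * \<mu> * \<bar>P3\<bar>)) \<le> ennreal (w powr (- \<theta>)) * ennreal (\<phi> \<bar>3 * \<mu> * C0 * f x\<bar>)"
  proof -
    have wp: "0 \<le> w powr (- \<theta>)" "w powr (- \<theta>) \<le> 1" using w \<theta> by (auto simp: powr_le_one_le ge_one_powr_ge_zero powr_minus_divide)
    have P3b: "\<bar>P3\<bar> \<le> C0 * w powr (- \<theta>) * \<bar>f x\<bar>"
    proof (cases "f x = 0")
      case True then show ?thesis unfolding P3_def by (simp add: K0)
    next
      case False
      have "\<bar>(1 / f x) * (\<Sum>\<^sub>\<infinity>k. K (w * x - t k) (f x)) - 1\<bar> \<le> C0 * w powr (- \<theta>)"
        by (rule chi4[OF w(2) False])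
      then have "\<bar>(1 / f x) * P3\<bar> \<le> C0 * w powr (- \<theta>)"
        unfolding P3_def isum using False by (simp add: right_diff_distrib)
      then have "\<bar>P3\<bar> / \<bar>f x\<bar> \<le> C0 * w powr (- \<theta>)" by (simp add: abs_mult)
      then show ?thesis using False by (simp add: divide_le_eq mult.commute)
    qed
    have "3 * \<mu> * \<bar>P3\<bar> \<le> w powr (- \<theta>) * \<bar>3 * \<mu> * C0 * f x\<bar>"
    proof -
      have "3 * \<mu> * \<bar>P3\<bar> \<le> 3 * \<mu> * (C0 * w powr (- \<theta>) * \<bar>f x\<bar>)"
        using P3b mu by simp
      also have "\<dots> = w powr (- \<theta>) * \<bar>3 * \<mu> * C0 * f x\<bar>"
        using mu C0 by (simp add: abs_mult algebra_simps)
      finally show ?thesis .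
    qed
    then have "\<phi> (3 * \<mu> * \<bar>P3\<bar>) \<le> \<phi> (w powr (- \<theta>) * \<bar>3 * \<mu> * C0 * f x\<bar>)"
      using mu by (intro phi_mono[OF p\<phi>]) auto
    also have "\<dots> \<le> w powr (- \<theta>) * \<phi> \<bar>3 * \<mu> * C0 * f x\<bar>"
      using wp p\<phi> by (intro convex_scale_le[OF cv\<phi>]) (auto simp: phi_function_def)
    finally have "\<phi> (3 * \<mu> * \<bar>P3\<bar>) \<le> w powr (- \<theta>) * \<phi> \<bar>3 * \<mu> * C0 * f x\<bar>" .
    then have "ennreal (\<phi> (3 * \<mu> * \<bar>P3\<bar>)) \<le> ennreal (w powr (- \<theta>) * \<phi> \<bar>3 * \<mu> * C0 * f x\<bar>)"
      by (rule ennreal_leI)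
    also have "\<dots> = ennreal (w powr (- \<theta>)) * ennreal (\<phi> \<bar>3 * \<mu> * C0 * f x\<bar>)"
      by (rule ennreal_mult'[OF wp(1)])
    finally show ?thesis .
  qed
  have "ennreal (\<phi> \<bar>\<mu> * (S_op t K w f x - f x)\<bar>) \<le> ennreal ((\<phi> (3 * \<mu> * \<bar>P1\<bar>) + \<phi> (3 * \<mu> * \<bar>P2\<bar>) + \<phi> (3 * \<mu> * \<bar>P3\<bar>)) / 3)"
    by (rule ennreal_leI[OF split])
  also have "\<dots> = ennreal (1/3) * (ennreal (\<phi> (3 * \<mu> * \<bar>P1\<bar>)) + ennreal (\<phi> (3 * \<mu> * \<bar>P2\<bar>)) + ennreal (\<phi> (3 * \<mu> * \<bar>P3\<bar>)))"
  proof -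
    have n: "0 \<le> \<phi> (3 * \<mu> * \<bar>P1\<bar>)" "0 \<le> \<phi> (3 * \<mu> * \<bar>P2\<bar>)" "0 \<le> \<phi> (3 * \<mu> * \<bar>P3\<bar>)"
      using phi_nonneg[OF p\<phi>] mu by auto
    have e: "(\<phi> (3 * \<mu> * \<bar>P1\<bar>) + \<phi> (3 * \<mu> * \<bar>P2\<bar>) + \<phi> (3 * \<mu> * \<bar>P3\<bar>)) / 3
        = (1/3) * (\<phi> (3 * \<mu> * \<bar>P1\<bar>) + \<phi> (3 * \<mu> * \<bar>P2\<bar>) + \<phi> (3 * \<mu> * \<bar>P3\<bar>))" by simp
    show ?thesis unfolding e using n by (subst ennreal_mult') auto
  qed
  also have "\<dots> \<le> ennreal (1/3) * (
      (\<integral>\<^sup>+k. ennreal (L (w * x - t k) / m * (w / (t (k+1) - t k))) * J1 k \<partial>count_space UNIV)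
    + ennreal (w / \<delta>) * J2
    + ennreal (w powr (- \<theta>)) * ennreal (\<phi> \<bar>3 * \<mu> * C0 * f x\<bar>))"
    by (intro mult_left_mono add_mono T1 T2 T3) auto
  finally show ?thesis unfolding J1_def J2_def .
qed

end



lemma borel_leb: "g \<in> borel_measurable borel \<Longrightarrow> g \<in> borel_measurable lebesgue"
  by (rule measurable_completion) simp

context setting
begin

lemma q_comp[measurable (raw)]:
  "g \<in> borel_measurable M \<Longrightarrow> (\<lambda>x. \<eta> \<bar>c * g x\<bar>) \<in> borel_measurable M"
  using measurable_compose[OF _ borel_measurable_continuous_onI[OF cont_abs_comp[of \<eta> c]]] p\<eta>
  by (auto simp: phi_function_def)

lemma phi_comp[measurable (raw)]:
  "g \<in> borel_measurable M \<Longrightarrow> (\<lambda>x. \<phi> \<bar>c * g x\<bar>) \<in> borel_measurable M"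
  using measurable_compose[OF _ borel_measurable_continuous_onI[OF cont_abs_comp[of \<phi> c]]] p\<phi>
  by (auto simp: phi_function_def)

lemma f_leb[measurable]: "f \<in> borel_measurable lebesgue"
  by (rule borel_leb) simp

lemma L_aff[measurable]: "b \<noteq> 0 \<Longrightarrow> (\<lambda>x. L (a + b * x)) \<in> borel_measurable lebesgue"
  using measurable_compose[OF aff_meas Lm] by blast

lemma mod_le:
  assumes "\<bar>s\<bar> \<le> d"
  shows "(\<integral>\<^sup>+x. ennreal (\<eta> \<bar>(1/2) * (f (x + s) - f x)\<bar>) \<partial>lborel) \<le> modulus \<eta> (1/2) f d"
proof -
  have "(\<integral>\<^sup>+x. ennreal (\<eta> \<bar>(1/2) * (f (x + s) - f x)\<bar>) \<partial>lborel) = modular \<eta> (\<lambda>x. (1/2) * (f (x + s) - f x))"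
    unfolding modular_def by (simp add: nn_integral_completion)
  also have "\<dots> \<le> modulus \<eta> (1/2) f d"
    unfolding modulus_def using assms by (intro SUP_upper) auto
  finally show ?thesis .
qed

lemma I3:
  "(\<integral>\<^sup>+x. ennreal (w powr (- \<theta>)) * ennreal (\<phi> \<bar>3 * \<mu> * C0 * f x\<bar>) \<partial>lebesgue)
     = ennreal (w powr (- \<theta>)) * modular \<phi> (\<lambda>x. 3 * \<mu> * C0 * f x)"
  unfolding modular_def by (rule nn_integral_cmult) measurable

lemma I2:
  assumes w: "0 < w"
  shows "(\<integral>\<^sup>+x. ennreal (w / \<delta>) * (\<integral>\<^sup>+y. indicator {0..\<Delta>/w} y * ennreal (\<eta> \<bar>(1/2) * (f (x + y) - f x)\<bar>) \<partial>lborel) \<partial>lebesgue)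
     \<le> ennreal (\<Delta> / \<delta>) * modulus \<eta> (1/2) f (\<Delta> / w)"
proof -
  let ?\<omega> = "modulus \<eta> (1/2) f (\<Delta> / w)"
  define G where "G x y = indicator {0..\<Delta>/w} y * ennreal (\<eta> \<bar>(1/2) * (f (x + y) - f x)\<bar>)" for x y
  have Gm: "(\<lambda>(x, y). G x y) \<in> borel_measurable (lborel \<Otimes>\<^sub>M lborel)"
    unfolding G_def by measurable
  have Jm: "(\<lambda>x. \<integral>\<^sup>+y. G x y \<partial>lborel) \<in> borel_measurable borel"
    using lborel.borel_measurable_nn_integral[of G lborel] Gm by simp
  have "(\<integral>\<^sup>+x. (\<integral>\<^sup>+y. G x y \<partial>lborel) \<partial>lebesgue) = (\<integral>\<^sup>+x. (\<integral>\<^sup>+y. G x y \<partial>lborel) \<partial>lborel)"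
    by (rule nn_integral_completion)
  also have "\<dots> = (\<integral>\<^sup>+y. (\<integral>\<^sup>+x. G x y \<partial>lborel) \<partial>lborel)"
    using lborel_pair.Fubini'[OF Gm] by simp
  also have "\<dots> = (\<integral>\<^sup>+y. indicator {0..\<Delta>/w} y * (\<integral>\<^sup>+x. ennreal (\<eta> \<bar>(1/2) * (f (x + y) - f x)\<bar>) \<partial>lborel) \<partial>lborel)"
    unfolding G_def by (intro nn_integral_cong nn_integral_cmult) measurable
  also have "\<dots> \<le> (\<integral>\<^sup>+y. ?\<omega> * indicator {0..\<Delta>/w} y \<partial>lborel)"
  proof (intro nn_integral_mono)
    fix y
    show "indicator {0..\<Delta>/w} y * (\<integral>\<^sup>+x. ennreal (\<eta> \<bar>(1/2) * (f (x + y) - f x)\<bar>) \<partial>lborel) \<le> ?\<omega> * indicator {0..\<Delta>/w} y"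
    proof (cases "y \<in> {0..\<Delta>/w}")
      case True
      then have "\<bar>y\<bar> \<le> \<Delta> / w" by auto
      then have "(\<integral>\<^sup>+x. ennreal (\<eta> \<bar>(1/2) * (f (x + y) - f x)\<bar>) \<partial>lborel) \<le> ?\<omega>" by (rule mod_le)
      then show ?thesis using True by (simp add: mult.commute)
    qed simp
  qed
  also have "\<dots> = ?\<omega> * ennreal (\<Delta> / w)"
  proof -
    have "0 \<le> \<Delta> / w" using dpos dgap[of 0] Dgap[of 0] w by simp
    then show ?thesis by (subst nn_integral_cmult_indicator) auto
  qed
  finally have X: "(\<integral>\<^sup>+x. (\<integral>\<^sup>+y. G x y \<partial>lborel) \<partial>lebesgue) \<le> ?\<omega> * ennreal (\<Delta> / w)" .
  have E1: "(\<integral>\<^sup>+x. ennreal (w / \<delta>) * (\<integral>\<^sup>+y. G x y \<partial>lborel) \<partial>lebesgue)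
      = ennreal (w / \<delta>) * (\<integral>\<^sup>+x. (\<integral>\<^sup>+y. G x y \<partial>lborel) \<partial>lebesgue)"
    by (rule nn_integral_cmult) (rule borel_leb[OF Jm])
  have "(\<integral>\<^sup>+x. ennreal (w / \<delta>) * (\<integral>\<^sup>+y. G x y \<partial>lborel) \<partial>lebesgue)
      \<le> ennreal (w / \<delta>) * (?\<omega> * ennreal (\<Delta> / w))"
    unfolding E1 by (rule mult_left_mono[OF X]) simp
  also have "\<dots> = ennreal (w / \<delta>) * ennreal (\<Delta> / w) * ?\<omega>"
    by (simp only: mult.assoc mult.commute mult.left_commute)
  also have "\<dots> = ennreal (\<Delta> / \<delta>) * ?\<omega>"
  proof -
    have "ennreal (w / \<delta>) * ennreal (\<Delta> / w) = ennreal (w / \<delta> * (\<Delta> / w))"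
      using w dpos by (subst ennreal_mult') auto
    also have "w / \<delta> * (\<Delta> / w) = \<Delta> / \<delta>" using w by simp
    finally show ?thesis by simp
  qed
  finally show ?thesis unfolding G_def .
qed


lemma shiftsum:
  assumes w: "0 < w" and h: "\<bar>h\<bar> \<le> d"
  shows "(\<integral>\<^sup>+k. (\<integral>\<^sup>+y. indicator {0..<(t (k+1) - t k) / w} y * ennreal (\<eta> \<bar>(1/2) * (f (t k / w + y) - f ((t k / w + -1 * h) + y))\<bar>) \<partial>lborel) \<partial>count_space UNIV)
     \<le> modulus \<eta> (1/2) f d"
proof -
  define E where "E z = ennreal (\<eta> \<bar>(1/2) * (f z - f (z - h))\<bar>)" for z
  have Em[measurable]: "E \<in> borel_measurable borel" unfolding E_def by measurable
  have a: "(\<integral>\<^sup>+y. indicator {0..<(t (k+1) - t k) / w} y * ennreal (\<eta> \<bar>(1/2) * (f (t k / w + y) - f ((t k / w + -1 * h) + y))\<bar>) \<partial>lborel)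
      = (\<integral>\<^sup>+z. indicator {t k / w ..< t (k+1) / w} z * E z \<partial>lborel)" for k
  proof -
    have "(\<integral>\<^sup>+z. indicator {t k / w ..< t (k+1) / w} z * E z \<partial>lborel)
        = ennreal \<bar>1\<bar> * (\<integral>\<^sup>+y. indicator {t k / w ..< t (k+1) / w} (t k / w + 1 * y) * E (t k / w + 1 * y) \<partial>lborel)"
      by (rule nn_integral_real_affine) auto
    also have "\<dots> = (\<integral>\<^sup>+y. indicator {0..<(t (k+1) - t k) / w} y * ennreal (\<eta> \<bar>(1/2) * (f (t k / w + y) - f ((t k / w + -1 * h) + y))\<bar>) \<partial>lborel)"
      unfolding E_def using w
      by (auto intro!: nn_integral_cong simp: indicator_def diff_divide_distrib algebra_simps)
    finally show ?thesis by simp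
  qed
  have "(\<integral>\<^sup>+k. (\<integral>\<^sup>+y. indicator {0..<(t (k+1) - t k) / w} y * ennreal (\<eta> \<bar>(1/2) * (f (t k / w + y) - f ((t k / w + -1 * h) + y))\<bar>) \<partial>lborel) \<partial>count_space UNIV)
      = (\<integral>\<^sup>+k. (\<integral>\<^sup>+z. indicator {t k / w ..< t (k+1) / w} z * E z \<partial>lborel) \<partial>count_space UNIV)"
    by (simp only: a)
  also have "\<dots> = (\<integral>\<^sup>+z. (\<integral>\<^sup>+k. indicator {t k / w ..< t (k+1) / w} z * E z \<partial>count_space UNIV) \<partial>lborel)"
    by (rule nn_integral_count_space_nn_integral[symmetric]) auto
  also have "\<dots> \<le> (\<integral>\<^sup>+z. E z \<partial>lborel)"
    by (intro nn_integral_mono count_indicator_le[OF ss w])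
  also have "\<dots> = ennreal \<bar>1\<bar> * (\<integral>\<^sup>+x. E (h + 1 * x) \<partial>lborel)"
    by (rule nn_integral_real_affine) auto
  also have "\<dots> = (\<integral>\<^sup>+x. ennreal (\<eta> \<bar>(1/2) * (f (x + h) - f x)\<bar>) \<partial>lborel)"
    unfolding E_def by (simp add: add.commute)
  also have "\<dots> \<le> modulus \<eta> (1/2) f d" by (rule mod_le[OF h])
  finally show ?thesis .
qed


lemma I1:
  assumes w: "0 < w" and Rw: "R / w \<le> d"
  shows "(\<integral>\<^sup>+x. (\<integral>\<^sup>+k. ennreal (L (w * x - t k) / m * (w / (t (k+1) - t k))) *
         (\<integral>\<^sup>+y. indicator {0..<(t (k+1) - t k) / w} y * ennreal (\<eta> \<bar>(1/2) * (f (t k / w + y) - f (x + y))\<bar>) \<partial>lborel) \<partial>count_space UNIV) \<partial>lebesgue)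
     \<le> ennreal ((LINT x|lebesgue. L x) / (\<delta> * m)) * modulus \<eta> (1/2) f d"
proof -
  define \<omega> where "\<omega> = modulus \<eta> (1/2) f d"
  define c where "c = w / \<delta>"
  define J where "J k x = (\<integral>\<^sup>+y. indicator {0..<(t (k+1) - t k) / w} y * ennreal (\<eta> \<bar>(1/2) * (f (t k / w + y) - f (x + y))\<bar>) \<partial>lborel)" for k x
  define Hk where "Hk k x = ennreal (L (w * x - t k) / m * (w / (t (k+1) - t k))) * J k x" for k x
  have Jm: "J k \<in> borel_measurable borel" for k
  proof -
    have "(\<lambda>(x, y). indicator {0..<(t (k+1) - t k) / w} y * ennreal (\<eta> \<bar>(1/2) * (f (t k / w + y) - f (x + y))\<bar>)) \<in> borel_measurable (borel \<Otimes>\<^sub>M lborel)"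
      by measurable
    then show ?thesis unfolding J_def
      using lborel.borel_measurable_nn_integral[of "\<lambda>x y. indicator {0..<(t (k+1) - t k) / w} y * ennreal (\<eta> \<bar>(1/2) * (f (t k / w + y) - f (x + y))\<bar>)" borel]
      by simp
  qed
  have Jm2: "(\<lambda>h. J k (a + b * h)) \<in> borel_measurable lebesgue" for k a b
    by (rule borel_leb) (rule measurable_compose[OF _ Jm]; measurable)
  have Lk: "(\<lambda>x. L (w * x - t k)) \<in> borel_measurable lebesgue" for k
  proof -
    have "(\<lambda>x. L (- t k + w * x)) \<in> borel_measurable lebesgue" by (rule L_aff) (use w in simp)
    moreover have "(\<lambda>x. L (- t k + w * x)) = (\<lambda>x. L (w * x - t k))" by (simp add: algebra_simps)
    ultimately show ?thesis by simp
  qed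
  have Lh: "(\<lambda>h. L (- (w * h))) \<in> borel_measurable lebesgue"
  proof -
    have "(\<lambda>h. L (0 + (- w) * h)) \<in> borel_measurable lebesgue" by (rule L_aff) (use w in simp)
    then show ?thesis by simp
  qed
  have Hm: "Hk k \<in> borel_measurable lebesgue" for k
    unfolding Hk_def using Lk[of k] borel_leb[OF Jm[of k]] by measurable
  have s1: "(\<integral>\<^sup>+x. (\<integral>\<^sup>+k. Hk k x \<partial>count_space UNIV) \<partial>lebesgue) = (\<integral>\<^sup>+k. (\<integral>\<^sup>+x. Hk k x \<partial>lebesgue) \<partial>count_space UNIV)"
    by (rule nn_integral_count_space_nn_integral) (auto intro: Hm)
  have s2: "(\<integral>\<^sup>+x. Hk k x \<partial>lebesgue) \<le> (\<integral>\<^sup>+h. ennreal (L (- (w * h)) * (c / m)) * J k (t k / w + -1 * h) \<partial>lebesgue)" for k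
  proof -
    have "(\<integral>\<^sup>+x. Hk k x \<partial>lebesgue) = ennreal \<bar>-1\<bar> * (\<integral>\<^sup>+h. Hk k (t k / w + -1 * h) \<partial>lebesgue)"
      by (rule nn_integral_real_affine_lebesgue[OF Hm]) simp
    also have "\<dots> = (\<integral>\<^sup>+h. Hk k (t k / w + -1 * h) \<partial>lebesgue)" by simp
    also have "\<dots> \<le> (\<integral>\<^sup>+h. ennreal (L (- (w * h)) * (c / m)) * J k (t k / w + -1 * h) \<partial>lebesgue)"
    proof (intro nn_integral_mono)
      fix h
      have e: "w * (t k / w + -1 * h) - t k = - (w * h)" using w by (simp add: algebra_simps)
      have "L (- (w * h)) / m * (w / (t (k+1) - t k)) \<le> L (- (w * h)) / m * c"
        unfolding c_def using Lnn m_nonneg dgap[of k] dpos w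
        by (intro mult_left_mono divide_left_mono) (auto intro: mult_pos_pos)
      also have "\<dots> = L (- (w * h)) * (c / m)" by simp
      finally have "ennreal (L (- (w * h)) / m * (w / (t (k+1) - t k))) \<le> ennreal (L (- (w * h)) * (c / m))"
        by (rule ennreal_leI)
      then show "Hk k (t k / w + -1 * h) \<le> ennreal (L (- (w * h)) * (c / m)) * J k (t k / w + -1 * h)"
        unfolding Hk_def e by (rule mult_right_mono) simp
    qed
    finally show ?thesis .
  qed
  have s3: "(\<integral>\<^sup>+k. (\<integral>\<^sup>+h. ennreal (L (- (w * h)) * (c / m)) * J k (t k / w + -1 * h) \<partial>lebesgue) \<partial>count_space UNIV)
      = (\<integral>\<^sup>+h. (\<integral>\<^sup>+k. ennreal (L (- (w * h)) * (c / m)) * J k (t k / w + -1 * h) \<partial>count_space UNIV) \<partial>lebesgue)"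
    by (rule nn_integral_count_space_nn_integral[symmetric]) (use Lh Jm2 in measurable)
  have s4: "(\<integral>\<^sup>+k. ennreal (L (- (w * h)) * (c / m)) * J k (t k / w + -1 * h) \<partial>count_space UNIV)
      = ennreal (L (- (w * h)) * (c / m)) * (\<integral>\<^sup>+k. J k (t k / w + -1 * h) \<partial>count_space UNIV)" for h
    by (rule nn_integral_cmult) simp
  have s5: "ennreal (L (- (w * h)) * (c / m)) * (\<integral>\<^sup>+k. J k (t k / w + -1 * h) \<partial>count_space UNIV)
      \<le> ennreal (L (- (w * h))) * (ennreal (c / m) * \<omega>)" for h
  proof (cases "L (- (w * h)) = 0")
    case True then show ?thesis by simp
  next
    case False
    then have "\<bar>- (w * h)\<bar> \<le> R" using Lsupp by force
    then have "\<bar>h\<bar> \<le> R / w" using w by (simp add: abs_mult field_simps)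
    then have hd: "\<bar>h\<bar> \<le> d" using Rw by linarith
    have "(\<integral>\<^sup>+k. J k (t k / w + -1 * h) \<partial>count_space UNIV) \<le> \<omega>"
      unfolding J_def \<omega>_def by (rule shiftsum[OF w hd])
    then have "ennreal (L (- (w * h)) * (c / m)) * (\<integral>\<^sup>+k. J k (t k / w + -1 * h) \<partial>count_space UNIV)
        \<le> ennreal (L (- (w * h)) * (c / m)) * \<omega>" by (rule mult_left_mono) simp
    also have "\<dots> = ennreal (L (- (w * h))) * (ennreal (c / m) * \<omega>)"
      by (simp only: ennreal_mult'[OF Lnn] mult.assoc)
    finally show ?thesis .
  qed
  have s6: "(\<integral>\<^sup>+h. ennreal (L (- (w * h))) * (ennreal (c / m) * \<omega>) \<partial>lebesgue)
      = (\<integral>\<^sup>+h. ennreal (L (- (w * h))) \<partial>lebesgue) * (ennreal (c / m) * \<omega>)"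
    by (rule nn_integral_multc) (use Lh in measurable)
  have s7: "(\<integral>\<^sup>+h. ennreal (L (- (w * h))) \<partial>lebesgue) = ennreal (1 / w) * ennreal (LINT x|lebesgue. L x)"
  proof -
    have Lm': "(\<lambda>x. ennreal (L x)) \<in> borel_measurable lebesgue" using Lm by measurable
    have "(\<integral>\<^sup>+x. ennreal (L x) \<partial>lebesgue) = ennreal \<bar>- w\<bar> * (\<integral>\<^sup>+h. ennreal (L (0 + (- w) * h)) \<partial>lebesgue)"
      by (rule nn_integral_real_affine_lebesgue[OF Lm']) (use w in simp)
    then have "ennreal (LINT x|lebesgue. L x) = ennreal w * (\<integral>\<^sup>+h. ennreal (L (- (w * h))) \<partial>lebesgue)"
      using w Li Lnn by (simp add: nn_integral_eq_integral)
    then have "ennreal (1 / w) * ennreal (LINT x|lebesgue. L x) = ennreal (1 / w) * ennreal w * (\<integral>\<^sup>+h. ennreal (L (- (w * h))) \<partial>lebesgue)"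
      by (simp add: mult.assoc)
    also have "ennreal (1 / w) * ennreal w = 1"
      using w by (simp add: ennreal_mult'[symmetric])
    finally show ?thesis by simp
  qed
  have "(\<integral>\<^sup>+x. (\<integral>\<^sup>+k. Hk k x \<partial>count_space UNIV) \<partial>lebesgue)
      \<le> (\<integral>\<^sup>+k. (\<integral>\<^sup>+h. ennreal (L (- (w * h)) * (c / m)) * J k (t k / w + -1 * h) \<partial>lebesgue) \<partial>count_space UNIV)"
    unfolding s1 by (intro nn_integral_mono s2)
  also have "\<dots> = (\<integral>\<^sup>+h. ennreal (L (- (w * h)) * (c / m)) * (\<integral>\<^sup>+k. J k (t k / w + -1 * h) \<partial>count_space UNIV) \<partial>lebesgue)"
    unfolding s3 s4 ..
  also have "\<dots> \<le> (\<integral>\<^sup>+h. ennreal (L (- (w * h))) * (ennreal (c / m) * \<omega>) \<partial>lebesgue)"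
    by (intro nn_integral_mono s5)
  also have "\<dots> = ennreal (1 / w) * ennreal (LINT x|lebesgue. L x) * (ennreal (c / m) * \<omega>)"
    unfolding s6 s7 ..
  also have "\<dots> = ennreal ((LINT x|lebesgue. L x) / (\<delta> * m)) * \<omega>"
  proof -
    have i0: "0 \<le> (LINT x|lebesgue. L x)" using Lnn by (simp add: integral_nonneg_AE)
    have "ennreal (1 / w) * ennreal (LINT x|lebesgue. L x) * ennreal (c / m) = ennreal (1 / w * (LINT x|lebesgue. L x) * (c / m))"
    proof -
      have a1: "ennreal (1 / w) * ennreal (LINT x|lebesgue. L x) = ennreal (1 / w * (LINT x|lebesgue. L x))"
        by (subst ennreal_mult') (use w in auto)
      have a2: "ennreal (1 / w * (LINT x|lebesgue. L x)) * ennreal (c / m) = ennreal (1 / w * (LINT x|lebesgue. L x) * (c / m))"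
        by (subst ennreal_mult') (use w i0 in auto)
      show ?thesis unfolding a1 a2 ..
    qed
    also have "1 / w * (LINT x|lebesgue. L x) * (c / m) = (LINT x|lebesgue. L x) / (\<delta> * m)"
      unfolding c_def using w by (simp add: field_simps)
    finally have X: "ennreal (1 / w) * ennreal (LINT x|lebesgue. L x) * ennreal (c / m) = ennreal ((LINT x|lebesgue. L x) / (\<delta> * m))" .
    show ?thesis using X by (simp only: mult.assoc[symmetric])
  qed
  finally show ?thesis unfolding Hk_def J_def \<omega>_def .
qed

end



context setting
begin

lemma T1_meas:
  assumes w: "0 < w"
  shows "(\<lambda>x. \<integral>\<^sup>+k. ennreal (L (w * x - t k) / m * (w / (t (k+1) - t k))) *
         (\<integral>\<^sup>+y. indicator {0..<(t (k+1) - t k) / w} y * ennreal (\<eta> \<bar>(1/2) * (f (t k / w + y) - f (x + y))\<bar>) \<partial>lborel) \<partial>count_space UNIV)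
     \<in> borel_measurable lebesgue"
proof (rule nn_count_measurable)
  fix k
  define J where "J x = (\<integral>\<^sup>+y. indicator {0..<(t (k+1) - t k) / w} y * ennreal (\<eta> \<bar>(1/2) * (f (t k / w + y) - f (x + y))\<bar>) \<partial>lborel)" for x
  have "(\<lambda>(x, y). indicator {0..<(t (k+1) - t k) / w} y * ennreal (\<eta> \<bar>(1/2) * (f (t k / w + y) - f (x + y))\<bar>)) \<in> borel_measurable (borel \<Otimes>\<^sub>M lborel)"
    by measurable
  then have Jm: "J \<in> borel_measurable borel" unfolding J_def
    using lborel.borel_measurable_nn_integral[of "\<lambda>x y. indicator {0..<(t (k+1) - t k) / w} y * ennreal (\<eta> \<bar>(1/2) * (f (t k / w + y) - f (x + y))\<bar>)" borel]
    by simp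
  have "(\<lambda>x. L (- t k + w * x)) \<in> borel_measurable lebesgue" by (rule L_aff) (use w in simp)
  moreover have "(\<lambda>x. L (- t k + w * x)) = (\<lambda>x. L (w * x - t k))" by (simp add: algebra_simps)
  ultimately have Lk: "(\<lambda>x. L (w * x - t k)) \<in> borel_measurable lebesgue" by simp
  show "(\<lambda>x. ennreal (L (w * x - t k) / m * (w / (t (k+1) - t k))) * J x) \<in> borel_measurable lebesgue"
    using Lk borel_leb[OF Jm] by measurable
qed

lemma T2_meas:
  "(\<lambda>x. ennreal (w / \<delta>) * (\<integral>\<^sup>+y. indicator {0..\<Delta>/w} y * ennreal (\<eta> \<bar>(1/2) * (f (x + y) - f x)\<bar>) \<partial>lborel))
     \<in> borel_measurable lebesgue"
proof -
  define G where "G x y = indicator {0..\<Delta>/w} y * ennreal (\<eta> \<bar>(1/2) * (f (x + y) - f x)\<bar>)" for x y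
  have Gm: "(\<lambda>(x, y). G x y) \<in> borel_measurable (borel \<Otimes>\<^sub>M lborel)"
    unfolding G_def by measurable
  have Jm: "(\<lambda>x. \<integral>\<^sup>+y. G x y \<partial>lborel) \<in> borel_measurable borel"
    using lborel.borel_measurable_nn_integral[of G borel] Gm by simp
  show ?thesis using borel_leb[OF Jm] unfolding G_def by measurable
qed

lemma integrated:
  assumes w: "1 \<le> w" "W0 \<le> w" and Rw: "R / w \<le> d"
  shows "modular \<phi> (\<lambda>x. \<mu> * (S_op t K w f x - f x))
     \<le> ennreal ((LINT x|lebesgue. L x) / (3 * \<delta> * m)) * modulus \<eta> (1/2) f d
       + ennreal (\<Delta> / (3 * \<delta>)) * modulus \<eta> (1/2) f (\<Delta> / w)
       + modular \<phi> (\<lambda>x. (3 * \<mu> * C0) * f x) / 3 * ennreal (w powr (- \<theta>))"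
proof -
  have wpos: "0 < w" using w by simp
  define T1 where "T1 x = (\<integral>\<^sup>+k. ennreal (L (w * x - t k) / m * (w / (t (k+1) - t k))) *
         (\<integral>\<^sup>+y. indicator {0..<(t (k+1) - t k) / w} y * ennreal (\<eta> \<bar>(1/2) * (f (t k / w + y) - f (x + y))\<bar>) \<partial>lborel) \<partial>count_space UNIV)" for x
  define T2 where "T2 x = ennreal (w / \<delta>) * (\<integral>\<^sup>+y. indicator {0..\<Delta>/w} y * ennreal (\<eta> \<bar>(1/2) * (f (x + y) - f x)\<bar>) \<partial>lborel)" for x
  define T3 where "T3 x = ennreal (w powr (- \<theta>)) * ennreal (\<phi> \<bar>3 * \<mu> * C0 * f x\<bar>)" for x
  have m1: "T1 \<in> borel_measurable lebesgue" unfolding T1_def by (rule T1_meas[OF wpos])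
  have m2: "T2 \<in> borel_measurable lebesgue" unfolding T2_def by (rule T2_meas)
  have m3: "T3 \<in> borel_measurable lebesgue" unfolding T3_def by measurable
  define A1 where "A1 = ennreal ((LINT x|lebesgue. L x) / (\<delta> * m)) * modulus \<eta> (1/2) f d"
  define A2 where "A2 = ennreal (\<Delta> / \<delta>) * modulus \<eta> (1/2) f (\<Delta> / w)"
  define A3 where "A3 = ennreal (w powr (- \<theta>)) * modular \<phi> (\<lambda>x. 3 * \<mu> * C0 * f x)"
  have i1: "(\<integral>\<^sup>+x. T1 x \<partial>lebesgue) \<le> A1" unfolding T1_def A1_def by (rule I1[OF wpos Rw])
  have i2: "(\<integral>\<^sup>+x. T2 x \<partial>lebesgue) \<le> A2" unfolding T2_def A2_def by (rule I2[OF wpos])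
  have i3: "(\<integral>\<^sup>+x. T3 x \<partial>lebesgue) = A3" unfolding T3_def A3_def by (rule I3)
  have "modular \<phi> (\<lambda>x. \<mu> * (S_op t K w f x - f x)) \<le> (\<integral>\<^sup>+x. ennreal (1/3) * (T1 x + T2 x + T3 x) \<partial>lebesgue)"
    unfolding modular_def T1_def T2_def T3_def by (intro nn_integral_mono pointwise[OF w])
  also have "\<dots> = ennreal (1/3) * ((\<integral>\<^sup>+x. T1 x \<partial>lebesgue) + (\<integral>\<^sup>+x. T2 x \<partial>lebesgue) + (\<integral>\<^sup>+x. T3 x \<partial>lebesgue))"
    using m1 m2 m3 by (simp add: nn_integral_cmult nn_integral_add)
  also have "\<dots> \<le> ennreal (1/3) * (A1 + A2 + A3)"
    using i1 i2 i3 by (intro mult_left_mono add_mono) auto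
  also have "\<dots> = ennreal ((LINT x|lebesgue. L x) / (3 * \<delta> * m)) * modulus \<eta> (1/2) f d
       + ennreal (\<Delta> / (3 * \<delta>)) * modulus \<eta> (1/2) f (\<Delta> / w)
       + modular \<phi> (\<lambda>x. (3 * \<mu> * C0) * f x) / 3 * ennreal (w powr (- \<theta>))"
  proof -
    have i0: "0 \<le> (LINT x|lebesgue. L x)" using Lnn by (simp add: integral_nonneg_AE)
    have D0: "0 \<le> \<Delta> / \<delta>" using dpos dgap[of 0] Dgap[of 0] by simp
    have e1: "ennreal (1/3) * A1 = ennreal ((LINT x|lebesgue. L x) / (3 * \<delta> * m)) * modulus \<eta> (1/2) f d"
    proof -
      have "ennreal (1/3) * ennreal ((LINT x|lebesgue. L x) / (\<delta> * m)) = ennreal (1/3 * ((LINT x|lebesgue. L x) / (\<delta> * m)))"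
        by (subst ennreal_mult') auto
      also have "1/3 * ((LINT x|lebesgue. L x) / (\<delta> * m)) = (LINT x|lebesgue. L x) / (3 * \<delta> * m)" by simp
      finally show ?thesis unfolding A1_def by (simp only: mult.assoc[symmetric])
    qed
    have e2: "ennreal (1/3) * A2 = ennreal (\<Delta> / (3 * \<delta>)) * modulus \<eta> (1/2) f (\<Delta> / w)"
    proof -
      have "ennreal (1/3) * ennreal (\<Delta> / \<delta>) = ennreal (1/3 * (\<Delta> / \<delta>))"
        by (subst ennreal_mult') auto
      also have "1/3 * (\<Delta> / \<delta>) = \<Delta> / (3 * \<delta>)" by simp
      finally show ?thesis unfolding A2_def by (simp only: mult.assoc[symmetric])
    qed
    have e3: "ennreal (1/3) * A3 = modular \<phi> (\<lambda>x. (3 * \<mu> * C0) * f x) / 3 * ennreal (w powr (- \<theta>))"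
    proof -
      have t: "ennreal (1/3) = 1 / 3" by (metis ennreal_divide_numeral ennreal_1 zero_le_one)
      have g: "(1/3::ennreal) * X = X / 3" for X
        by (metis ennreal_times_divide mult.commute mult.right_neutral)
      show ?thesis unfolding A3_def t g
        by (metis ennreal_times_divide mult.commute)
    qed
    show ?thesis by (simp only: distrib_left e1 e2 e3)
  qed
  finally show ?thesis .
qed

end



lemma AE_shift:
  fixes f g :: "real \<Rightarrow> real"
  assumes "AE x in lborel. f x = g x"
  shows "AE x in lebesgue. f (x + s) = g (x + s)"
proof -
  from assms obtain N where N0: "{x \<in> space lborel. \<not> (f x = g x)} \<subseteq> N" "emeasure lborel N = 0" "N \<in> sets lborel"
    by (rule AE_E)
  then have N: "N \<in> null_sets lborel" "{x \<in> space lborel. \<not> (f x = g x)} \<subseteq> N" by auto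
  have Nb: "N \<in> sets borel" using N(1) by auto
  have "AE x in lborel. x \<notin> N" by (rule AE_not_in[OF N(1)])
  then have "AE x in lborel. s + 1 * x \<notin> N"
    by (intro AE_borel_affine) (use Nb in measurable)
  then have "AE x in lborel. f (x + s) = g (x + s)"
    by eventually_elim (use N(2) in \<open>auto simp: add.commute\<close>)
  then show ?thesis by (rule AE_completion)
qed

lemma transfer:
  fixes f g :: "real \<Rightarrow> real"
  assumes fm: "f \<in> borel_measurable lebesgue" and gm: "g \<in> borel_measurable borel"
    and ae: "AE x in lborel. f x = g x"
  shows "S_op t K w f = S_op t K w g"
    and "modular \<phi> (\<lambda>x. c * (S_op t K w f x - f x)) = modular \<phi> (\<lambda>x. c * (S_op t K w g x - g x))"
    and "modulus \<eta> c f d = modulus \<eta> c g d"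
    and "modular \<phi> (\<lambda>x. c * f x) = modular \<phi> (\<lambda>x. c * g x)"
proof -
  have gl: "g \<in> borel_measurable lebesgue" by (rule borel_leb[OF gm])
  have ael: "AE x in lebesgue. f x = g x" by (rule AE_completion[OF ae])
  have ints: "(LINT u:{a..b}|lebesgue. f u) = (LINT u:{a..b}|lebesgue. g u)" for a b
    by (rule set_lebesgue_integral_cong_AE) (use fm gl ael in auto)
  show S: "S_op t K w f = S_op t K w g"
    unfolding S_op_def ints ..
  show "modular \<phi> (\<lambda>x. c * (S_op t K w f x - f x)) = modular \<phi> (\<lambda>x. c * (S_op t K w g x - g x))"
    unfolding modular_def S using ael by (intro nn_integral_cong_AE) auto
  show "modular \<phi> (\<lambda>x. c * f x) = modular \<phi> (\<lambda>x. c * g x)"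
    unfolding modular_def using ael by (intro nn_integral_cong_AE) auto
  have "modular \<eta> (\<lambda>x. c * (f (x + s) - f x)) = modular \<eta> (\<lambda>x. c * (g (x + s) - g x))" for s
    unfolding modular_def using ael AE_shift[OF ae, of s]
    by (intro nn_integral_cong_AE) (auto elim: eventually_mono simp: eventually_conj_iff)
  then show "modulus \<eta> c f d = modulus \<eta> c g d"
    unfolding modulus_def by simp
qed



theorem corollary3p1:
  fixes t :: "int \<Rightarrow> real" and \<delta> \<Delta> \<theta>\<^sub>0 :: real
    and K :: "real \<Rightarrow> real \<Rightarrow> real" and L \<psi> \<phi> \<eta> f :: "real \<Rightarrow> real"
  assumes "sampling_sequence t \<delta> \<Delta>"
    and "kernel_cond t K L \<psi> \<theta>\<^sub>0"
    and "L1_cond L" and "L2_cond t L" and "m0_finite t L"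
    and "\<exists>R. \<forall>x. \<bar>x\<bar> > R \<longrightarrow> L x = 0"
    and "phi_function \<phi>" and "convex_on {0..} \<phi>"
    and "condH \<phi> \<psi> \<eta>" and "phi_function \<eta>" and "convex_on {0..} \<eta>"
    and "f \<in> orlicz_space (\<lambda>u. \<phi> u + \<eta> u)"
  shows "\<forall>\<alpha>. 0 < \<alpha> \<and> \<alpha> < 1 \<longrightarrow>
    (\<exists>\<mu>>0. \<exists>lam0>0. \<exists>lam>0. \<forall>\<^sub>F w in at_top.
       modular \<phi> (\<lambda>x. \<mu> * (S_op t K w f x - f x))
       \<le> ennreal ((LINT x|lebesgue. L x) / (3 * \<delta> * m0 t L)) * modulus \<eta> lam f (1 / w powr \<alpha>)
         + ennreal (\<Delta> / (3 * \<delta>)) * modulus \<eta> lam f (\<Delta> / w)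
         + modular \<phi> (\<lambda>x. lam0 * f x) / 3 * ennreal (w powr (- \<theta>\<^sub>0)))"
proof -
  note ss = assms(1)
  have K0: "\<And>x. K x 0 = 0" and Lm: "L \<in> borel_measurable lebesgue" and Lnn: "\<And>x. 0 \<le> L x"
    and p\<psi>: "phi_function \<psi>" and Lip: "\<And>x u v. \<bar>K x u - K x v\<bar> \<le> L x * \<psi> \<bar>u - v\<bar>"
    and th: "0 < \<theta>\<^sub>0"
    using assms(2) unfolding kernel_cond_def by auto
  obtain C W where chi: "\<And>w x u. W \<le> w \<Longrightarrow> u \<noteq> 0 \<Longrightarrow>
      \<bar>(1 / u) * (\<Sum>\<^sub>\<infinity>k. K (w * x - t k) u) - 1\<bar> \<le> C * w powr (- \<theta>\<^sub>0)"
    using assms(2) unfolding kernel_cond_def by blast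
  have Li: "integrable lebesgue L" using assms(3) unfolding L1_cond_def by auto
  obtain M where Mb: "\<And>u. (\<lambda>k. L (u - t k)) summable_on UNIV \<and> (\<Sum>\<^sub>\<infinity>k. L (u - t k)) \<le> M"
    using assms(5) unfolding m0_finite_def by blast
  obtain R where Rs: "\<And>x. \<bar>x\<bar> > R \<Longrightarrow> L x = 0" using assms(6) by blast
  obtain Cc where Cc: "0 < Cc" "Cc < 1" and H: "\<And>u. 0 \<le> u \<Longrightarrow> \<phi> (Cc * \<psi> u) \<le> \<eta> ((1/2) * u)"
  proof -
    have h: "\<forall>c. 0 < c \<and> c < 1 \<longrightarrow> (\<exists>C>0. C < 1 \<and> (\<forall>u\<ge>0. \<phi> (C * \<psi> u) \<le> \<eta> (c * u)))"
      using assms(9) unfolding condH_def by blast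
    have "0 < (1/2::real) \<and> (1/2::real) < 1" by simp
    with h have "\<exists>C>0. C < 1 \<and> (\<forall>u\<ge>0. \<phi> (C * \<psi> u) \<le> \<eta> ((1/2) * u))" by blast
    then show ?thesis using that by blast
  qed
  have fm: "f \<in> borel_measurable lebesgue" and "\<exists>c>0. modular (\<lambda>u. \<phi> u + \<eta> u) (\<lambda>x. c * f x) < \<infinity>"
    using assms(12) unfolding orlicz_space_def by auto
  then obtain c where c: "0 < c" and cfin: "modular (\<lambda>u. \<phi> u + \<eta> u) (\<lambda>x. c * f x) < \<infinity>" by blast
  obtain g where gm': "g \<in> borel_measurable lborel" and ae: "AE x in lborel. f x = g x"
    using completion_ex_borel_measurable_real[OF fm] by blast
  have gm: "g \<in> borel_measurable borel" using gm' by simp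
  define m where "m = m0 t L"
  have Lsum: "\<And>u F. finite F \<Longrightarrow> (\<Sum>k\<in>F. L (u - t k)) \<le> m"
  proof -
    fix u and F :: "int set" assume F: "finite F"
    have "(\<Sum>k\<in>F. L (u - t k)) \<le> (\<Sum>\<^sub>\<infinity>k. L (u - t k))"
      using Mb[of u] F Lnn by (intro finite_sum_le_infsum) auto
    also have "\<dots> \<le> m" unfolding m_def m0_def
      by (rule cSUP_upper) (use Mb in \<open>auto intro!: bdd_aboveI2\<close>)
    finally show "(\<Sum>k\<in>F. L (u - t k)) \<le> m" .
  qed
  have m_nn: "0 \<le> m" using Lsum[of "{}"] by simp
  define R' where "R' = max R 1"
  have Rp: "0 < R'" unfolding R'_def by simp
  have Rs': "\<And>x. R' < \<bar>x\<bar> \<Longrightarrow> L x = 0" using Rs unfolding R'_def by force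
  define C0 where "C0 = max C 1"
  have C0: "1 \<le> C0" unfolding C0_def by simp
  have chi': "\<And>w x u. W \<le> w \<Longrightarrow> u \<noteq> 0 \<Longrightarrow>
      \<bar>(1 / u) * (\<Sum>\<^sub>\<infinity>k. K (w * x - t k) u) - 1\<bar> \<le> C0 * w powr (- \<theta>\<^sub>0)"
  proof -
    fix w x u :: real assume "W \<le> w" "u \<noteq> 0"
    then have "\<bar>(1 / u) * (\<Sum>\<^sub>\<infinity>k. K (w * x - t k) u) - 1\<bar> \<le> C * w powr (- \<theta>\<^sub>0)" by (rule chi)
    also have "\<dots> \<le> C0 * w powr (- \<theta>\<^sub>0)" unfolding C0_def by (intro mult_right_mono) auto
    finally show "\<bar>(1 / u) * (\<Sum>\<^sub>\<infinity>k. K (w * x - t k) u) - 1\<bar> \<le> C0 * w powr (- \<theta>\<^sub>0)" .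
  qed
  define \<mu> where "\<mu> = Cc / (3 * (m + 1))"
  have mu: "0 < \<mu>" "3 * \<mu> * m \<le> Cc"
  proof -
    show "0 < \<mu>" unfolding \<mu>_def using Cc m_nn by simp
    have "3 * \<mu> * m = Cc * (m / (m + 1))" unfolding \<mu>_def using m_nn by (simp add: field_simps)
    also have "\<dots> \<le> Cc * 1" using Cc m_nn by (intro mult_left_mono) auto
    finally show "3 * \<mu> * m \<le> Cc" by simp
  qed
  have fin: "(\<integral>\<^sup>+x. ennreal (\<phi> \<bar>c * g x\<bar>) \<partial>lborel) < \<infinity>"
  proof -
    have "(\<integral>\<^sup>+x. ennreal (\<phi> \<bar>c * g x\<bar>) \<partial>lborel) = (\<integral>\<^sup>+x. ennreal (\<phi> \<bar>c * g x\<bar>) \<partial>lebesgue)"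
      by (simp add: nn_integral_completion)
    also have "\<dots> = (\<integral>\<^sup>+x. ennreal (\<phi> \<bar>c * f x\<bar>) \<partial>lebesgue)"
      using AE_completion[OF ae] by (intro nn_integral_cong_AE) auto
    also have "\<dots> \<le> modular (\<lambda>u. \<phi> u + \<eta> u) (\<lambda>x. c * f x)"
      unfolding modular_def using phi_nonneg[OF assms(10)] by (intro nn_integral_mono ennreal_leI) auto
    finally show ?thesis using cfin by simp
  qed
  have gi: "\<And>a b. set_integrable lborel {a..b} g"
    by (rule loc_int[OF gm c assms(7) assms(8) fin])
  interpret S: setting t \<delta> \<Delta> \<theta>\<^sub>0 K L \<psi> \<phi> \<eta> g R' C0 W Cc \<mu> m
    by (intro setting.intro) (fact ss Lip K0 Lnn Rp Rs' p\<psi> assms(7) assms(8) assms(10) assms(11) H Cc(1) chi' C0 th Lsum mu(1) mu(2) gm gi Lm Li)+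
  show ?thesis
  proof (intro allI impI)
    fix \<alpha> :: real assume \<alpha>: "0 < \<alpha> \<and> \<alpha> < 1"
    define W1 where "W1 = max (max W 1) (R' powr (1 / (1 - \<alpha>)))"
    have ev: "\<forall>\<^sub>F w in at_top. W1 \<le> w" by (rule eventually_ge_at_top)
    have main: "modular \<phi> (\<lambda>x. \<mu> * (S_op t K w f x - f x))
       \<le> ennreal ((LINT x|lebesgue. L x) / (3 * \<delta> * m0 t L)) * modulus \<eta> (1/2) f (1 / w powr \<alpha>)
         + ennreal (\<Delta> / (3 * \<delta>)) * modulus \<eta> (1/2) f (\<Delta> / w)
         + modular \<phi> (\<lambda>x. (3 * \<mu> * C0) * f x) / 3 * ennreal (w powr (- \<theta>\<^sub>0))" if w: "W1 \<le> w" for w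
    proof -
      have w1: "1 \<le> w" "W \<le> w" using w unfolding W1_def by auto
      have wpos: "0 < w" using w1 by simp
      have "R' = (R' powr (1 / (1 - \<alpha>))) powr (1 - \<alpha>)"
        using Rp \<alpha> by (simp add: powr_powr)
      also have "\<dots> \<le> w powr (1 - \<alpha>)"
        using w \<alpha> unfolding W1_def by (intro powr_mono2) auto
      also have "\<dots> = w / w powr \<alpha>" using wpos by (simp add: powr_diff)
      finally have "R' \<le> w / w powr \<alpha>" .
      then have Rw: "R' / w \<le> 1 / w powr \<alpha>" using wpos by (simp add: field_simps)
      have "modular \<phi> (\<lambda>x. \<mu> * (S_op t K w g x - g x))
         \<le> ennreal ((LINT x|lebesgue. L x) / (3 * \<delta> * m)) * modulus \<eta> (1/2) g (1 / w powr \<alpha>)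
           + ennreal (\<Delta> / (3 * \<delta>)) * modulus \<eta> (1/2) g (\<Delta> / w)
           + modular \<phi> (\<lambda>x. (3 * \<mu> * C0) * g x) / 3 * ennreal (w powr (- \<theta>\<^sub>0))"
        by (rule S.integrated[OF w1 Rw])
      then show ?thesis
        unfolding m_def transfer(2-4)[OF fm gm ae] .
    qed
    show "\<exists>\<mu>>0. \<exists>lam0>0. \<exists>lam>0. \<forall>\<^sub>F w in at_top.
       modular \<phi> (\<lambda>x. \<mu> * (S_op t K w f x - f x))
       \<le> ennreal ((LINT x|lebesgue. L x) / (3 * \<delta> * m0 t L)) * modulus \<eta> lam f (1 / w powr \<alpha>)
         + ennreal (\<Delta> / (3 * \<delta>)) * modulus \<eta> lam f (\<Delta> / w)
         + modular \<phi> (\<lambda>x. lam0 * f x) / 3 * ennreal (w powr (- \<theta>\<^sub>0))"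
    proof (intro exI conjI)
      show "0 < \<mu>" by (rule mu(1))
      show "0 < 3 * \<mu> * C0" using mu C0 by simp
      show "(0::real) < 1/2" by simp
      show "\<forall>\<^sub>F w in at_top.
       modular \<phi> (\<lambda>x. \<mu> * (S_op t K w f x - f x))
       \<le> ennreal ((LINT x|lebesgue. L x) / (3 * \<delta> * m0 t L)) * modulus \<eta> (1/2) f (1 / w powr \<alpha>)
         + ennreal (\<Delta> / (3 * \<delta>)) * modulus \<eta> (1/2) f (\<Delta> / w)
         + modular \<phi> (\<lambda>x. (3 * \<mu> * C0) * f x) / 3 * ennreal (w powr (- \<theta>\<^sub>0))"
        using ev by eventually_elim (rule main)
    qed
  qed
qed


end
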